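(* Under standing assumption (S), let $R$ be a commutative $D$-module algebra which is Noetherian as a ring and simple as a $D$-module algebra, and assume each $g\in G$ acts as an injective endomorphism of $R$. Let $G$ act on $\Omega(R)$ from the right by $P.g=g^{-1}(P)$, let $G_P=\{g\in G:g^{-1}(P)=P\}$ and $G_{\Omega(R)}=\bigcap_{Q\in\Omega(R)}G_Q$. Then: (1) every $P\in\Omega(R)$ is $D^1$-stable, so that $R/P$ is a $D(G_P)$-module domain, and $R/P$ is simple as a $D(G_{\Omega(R)})$-module algebra; (2) the action of $G$ on $\Omega(R)$ is transitive (in particular the stabilizers $G_P$ are conjugate); (3) the natural map $R\to\prod_{P\in\Omega(R)}R/P$ is an isomorphism.
   Context: Standing assumption (S): $C$ is a field, $G$ a monoid, $CG$ the monoid algebra as a $C$-bialgebra with $\Delta(g)=g\otimes g$, $\varepsilon(g)=1$; $D^1$ is a pointed irreducible cocommutative Hopf algebra over $C$ of Birkhoff–Witt type (as a coalgebra the cofree pointed irreducible cocommutative coalgebra $B(U)$ on some $C$-vector space $U$, in Sweedler's sense) which is a $CG$-module algebra; $D=D^1\#CG$ is the smash product and $D(G')=D^1\#CG'$ for a submonoid $G'$. A $D$-module algebra is a $C$-algebra with a $D$-action satisfying $d.(ab)=\sum(d_{(1)}.a)(d_{(2)}.b)$, $d.1=\varepsilon(d)1$; each $g\in G$ acts as a $C$-algebra endomorphism $a\mapsto g.a$, and $g^{-1}(P)$ is the preimage of $P$. An ideal $I$ is $D$-stable (resp. $D^1$-stable) if $d.I\subseteq I$ for all $d\in D$ (resp.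 $D^1$); $R$ is simple if its only $D$-stable ideals are $0$ and $R$. $\Omega(R)$ is the set of minimal prime ideals of $R$. *)

theory Defs
  imports "HOL-Algebra.Algebra" "HOL-Library.Poly_Mapping"
begin

text \<open>A Hopf algebra of Birkhoff--Witt type is, as a coalgebra, Sweedler's B(U).
  Choosing a basis indexed by a set I of U, B(U) has the C-basis e_alpha, alpha
  ranging over finitely supported multi-indices I \<Rightarrow> nat, with
  Delta(e_alpha) = sum over beta+gamma=alpha of e_beta (x) e_gamma and
  eps(e_alpha) = [alpha = 0]; the unique grouplike e_0 is the unit 1.
  We therefore model D1 concretely as the space of finitely supported
  C-valued functions on this basis; the algebra structure is given by
  structure constants m alpha beta = e_alpha * e_beta.\<close>

type_synonym 'i mon = "'i \<Rightarrow>\<^sub>0 nat"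
type_synonym ('i, 'c) vec = "'i mon \<Rightarrow>\<^sub>0 'c"

definition BW_basis :: "'i set \<Rightarrow> 'i mon set" where
  "BW_basis I = {\<alpha>. Poly_Mapping.keys \<alpha> \<subseteq> I}"

definition splits :: "'i mon \<Rightarrow> ('i mon \<times> 'i mon) set" where
  "splits \<alpha> = {(\<beta>, \<gamma>). \<beta> + \<gamma> = \<alpha>}"

definition bvec :: "'i mon \<Rightarrow> ('i, 'c::comm_ring_1) vec" where
  "bvec \<alpha> = Poly_Mapping.single \<alpha> 1"

definition vlin :: "('i mon \<Rightarrow> ('i, 'c::comm_ring_1) vec) \<Rightarrow> ('i, 'c) vec \<Rightarrow> ('i, 'c) vec" where
  "vlin f u = (\<Sum>\<alpha>\<in>Poly_Mapping.keys u. Poly_Mapping.map (\<lambda>c. Poly_Mapping.lookup u \<alpha> * c) (f \<alpha>))"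

definition vmult :: "('i mon \<Rightarrow> 'i mon \<Rightarrow> ('i, 'c::comm_ring_1) vec)
    \<Rightarrow> ('i, 'c) vec \<Rightarrow> ('i, 'c) vec \<Rightarrow> ('i, 'c) vec" where
  "vmult m u v = vlin (\<lambda>\<alpha>. vlin (\<lambda>\<beta>. m \<alpha> \<beta>) v) u"

text \<open>(I, m) defines a Hopf algebra structure on B(U) (with the fixed
  coalgebra structure above): associative unital algebra with unit e_0,
  Delta and eps algebra maps, and an antipode exists.\<close>
definition BW_hopf :: "'i set \<Rightarrow> ('i mon \<Rightarrow> 'i mon \<Rightarrow> ('i, 'c::field) vec) \<Rightarrow> bool" where
  "BW_hopf I m \<longleftrightarrow>
     (\<forall>\<alpha>\<in>BW_basis I. \<forall>\<beta>\<in>BW_basis I. Poly_Mapping.keys (m \<alpha> \<beta>) \<subseteq> BW_basis I) \<and>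
     (\<forall>\<alpha>\<in>BW_basis I. \<forall>\<beta>\<in>BW_basis I. \<forall>\<gamma>\<in>BW_basis I.
        vmult m (m \<alpha> \<beta>) (bvec \<gamma>) = vmult m (bvec \<alpha>) (m \<beta> \<gamma>)) \<and>
     (\<forall>\<alpha>\<in>BW_basis I. m 0 \<alpha> = bvec \<alpha> \<and> m \<alpha> 0 = bvec \<alpha>) \<and>
     (\<forall>\<alpha>\<in>BW_basis I. \<forall>\<beta>\<in>BW_basis I. \<forall>\<delta>1 \<delta>2.
        Poly_Mapping.lookup (m \<alpha> \<beta>) (\<delta>1 + \<delta>2) =
          (\<Sum>(\<alpha>1, \<alpha>2)\<in>splits \<alpha>. \<Sum>(\<beta>1, \<beta>2)\<in>splits \<beta>.
              Poly_Mapping.lookup (m \<alpha>1 \<beta>1) \<delta>1 * Poly_Mapping.lookup (m \<alpha>2 \<beta>2) \<delta>2)) \<and>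
     (\<forall>\<alpha>\<in>BW_basis I. \<forall>\<beta>\<in>BW_basis I.
        Poly_Mapping.lookup (m \<alpha> \<beta>) 0 = (if \<alpha> = 0 \<and> \<beta> = 0 then 1 else 0)) \<and>
     (\<exists>S :: 'i mon \<Rightarrow> ('i, 'c) vec.
        (\<forall>\<alpha>\<in>BW_basis I. Poly_Mapping.keys (S \<alpha>) \<subseteq> BW_basis I) \<and>
        (\<forall>\<alpha>\<in>BW_basis I.
           (\<Sum>(\<beta>, \<gamma>)\<in>splits \<alpha>. vmult m (S \<beta>) (bvec \<gamma>)) = (if \<alpha> = 0 then bvec 0 else 0) \<and>
           (\<Sum>(\<beta>, \<gamma>)\<in>splits \<alpha>. vmult m (bvec \<beta>) (S \<gamma>)) = (if \<alpha> = 0 then bvec 0 else 0)))"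

text \<open>D1 is a CG-module algebra: gact g alpha = g.e_alpha (extended linearly).\<close>
definition CG_module_algebra ::
  "'i set \<Rightarrow> ('i mon \<Rightarrow> 'i mon \<Rightarrow> ('i, 'c::field) vec)
     \<Rightarrow> ('g::monoid_mult \<Rightarrow> 'i mon \<Rightarrow> ('i, 'c) vec) \<Rightarrow> bool" where
  "CG_module_algebra I m gact \<longleftrightarrow>
     (\<forall>g. \<forall>\<alpha>\<in>BW_basis I. Poly_Mapping.keys (gact g \<alpha>) \<subseteq> BW_basis I) \<and>
     (\<forall>\<alpha>\<in>BW_basis I. gact 1 \<alpha> = bvec \<alpha>) \<and>
     (\<forall>g h. \<forall>\<alpha>\<in>BW_basis I. gact (g * h) \<alpha> = vlin (gact g) (gact h \<alpha>)) \<and>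
     (\<forall>g. gact g 0 = bvec 0) \<and>
     (\<forall>g. \<forall>\<alpha>\<in>BW_basis I. \<forall>\<beta>\<in>BW_basis I.
        vlin (gact g) (m \<alpha> \<beta>) = vmult m (gact g \<alpha>) (gact g \<beta>))"

definition C_algebra :: "('a, 'b) ring_scheme \<Rightarrow> ('c::field \<Rightarrow> 'a \<Rightarrow> 'a) \<Rightarrow> bool" where
  "C_algebra R smul \<longleftrightarrow> ring R \<and>
     (\<forall>c. \<forall>a\<in>carrier R. smul c a \<in> carrier R) \<and>
     (\<forall>c. \<forall>a\<in>carrier R. \<forall>b\<in>carrier R. smul c (a \<oplus>\<^bsub>R\<^esub> b) = smul c a \<oplus>\<^bsub>R\<^esub> smul c b) \<and>
     (\<forall>c d. \<forall>a\<in>carrier R. smul (c + d) a = smul c a \<oplus>\<^bsub>R\<^esub> smul d a) \<and>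
     (\<forall>c d. \<forall>a\<in>carrier R. smul (c * d) a = smul c (smul d a)) \<and>
     (\<forall>a\<in>carrier R. smul 1 a = a) \<and>
     (\<forall>c. \<forall>a\<in>carrier R. \<forall>b\<in>carrier R.
        smul c (a \<otimes>\<^bsub>R\<^esub> b) = smul c a \<otimes>\<^bsub>R\<^esub> b \<and> smul c (a \<otimes>\<^bsub>R\<^esub> b) = a \<otimes>\<^bsub>R\<^esub> smul c b)"

text \<open>Action of a vector u of D1 tensored with g, from the action on basis
  elements e_gamma # g.\<close>
definition vact :: "('a, 'b) ring_scheme \<Rightarrow> ('c::field \<Rightarrow> 'a \<Rightarrow> 'a)
    \<Rightarrow> ('i mon \<Rightarrow> 'g \<Rightarrow> 'a \<Rightarrow> 'a) \<Rightarrow> ('i, 'c) vec \<Rightarrow> 'g \<Rightarrow> 'a \<Rightarrow> 'a" where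
  "vact R smul act u g a = (\<Oplus>\<^bsub>R\<^esub>\<gamma>\<in>Poly_Mapping.keys u. smul (Poly_Mapping.lookup u \<gamma>) (act \<gamma> g a))"

text \<open>R is a D-module algebra for D = D1 # CG, where act alpha g a = (e_alpha # g).a.
  The smash product multiplication is
  (e_alpha # g)(e_beta # h) = (e_alpha (g.e_beta)) # gh, and
  Delta(e_alpha # g) = sum over beta+gamma=alpha of (e_beta # g) (x) (e_gamma # g),
  eps(e_alpha # g) = [alpha = 0].\<close>
definition D_module_algebra ::
  "'i set \<Rightarrow> ('i mon \<Rightarrow> 'i mon \<Rightarrow> ('i, 'c::field) vec) \<Rightarrow> ('g::monoid_mult \<Rightarrow> 'i mon \<Rightarrow> ('i, 'c) vec)
     \<Rightarrow> ('a, 'b) ring_scheme \<Rightarrow> ('c \<Rightarrow> 'a \<Rightarrow> 'a) \<Rightarrow> ('i mon \<Rightarrow> 'g \<Rightarrow> 'a \<Rightarrow> 'a) \<Rightarrow> bool" where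
  "D_module_algebra I m gact R smul act \<longleftrightarrow>
     C_algebra R smul \<and>
     (\<forall>\<alpha>\<in>BW_basis I. \<forall>g. \<forall>a\<in>carrier R. act \<alpha> g a \<in> carrier R) \<and>
     (\<forall>\<alpha>\<in>BW_basis I. \<forall>g. \<forall>a\<in>carrier R. \<forall>b\<in>carrier R.
        act \<alpha> g (a \<oplus>\<^bsub>R\<^esub> b) = act \<alpha> g a \<oplus>\<^bsub>R\<^esub> act \<alpha> g b) \<and>
     (\<forall>\<alpha>\<in>BW_basis I. \<forall>g c. \<forall>a\<in>carrier R. act \<alpha> g (smul c a) = smul c (act \<alpha> g a)) \<and>
     (\<forall>a\<in>carrier R. act 0 1 a = a) \<and>
     (\<forall>\<alpha>\<in>BW_basis I. \<forall>\<beta>\<in>BW_basis I. \<forall>g h. \<forall>a\<in>carrier R.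
        act \<alpha> g (act \<beta> h a) = vact R smul act (vmult m (bvec \<alpha>) (gact g \<beta>)) (g * h) a) \<and>
     (\<forall>\<alpha>\<in>BW_basis I. \<forall>g. \<forall>a\<in>carrier R. \<forall>b\<in>carrier R.
        act \<alpha> g (a \<otimes>\<^bsub>R\<^esub> b) =
          finsum R (\<lambda>(\<beta>, \<gamma>). act \<beta> g a \<otimes>\<^bsub>R\<^esub> act \<gamma> g b) (splits \<alpha>)) \<and>
     (\<forall>\<alpha>\<in>BW_basis I. \<forall>g. act \<alpha> g \<one>\<^bsub>R\<^esub> = (if \<alpha> = 0 then \<one>\<^bsub>R\<^esub> else \<zero>\<^bsub>R\<^esub>))"

text \<open>The action of g in G: a \<mapsto> g.a, i.e. the action of e_0 # g.\<close>
abbreviation gmap :: "('i mon \<Rightarrow> 'g \<Rightarrow> 'a \<Rightarrow> 'a) \<Rightarrow> 'g \<Rightarrow> 'a \<Rightarrow> 'a" where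
  "gmap act g \<equiv> act 0 g"

text \<open>Stability of a subset under D(G') = D1 # CG' (G' a submonoid); since ideals
  are C-subspaces it suffices to test on the basis e_alpha # g.
  D1-stable is stability under D({1}), D-stable is stability under D(UNIV).\<close>
definition stable_under :: "'i set \<Rightarrow> ('i mon \<Rightarrow> 'g \<Rightarrow> 'a \<Rightarrow> 'a) \<Rightarrow> 'g set \<Rightarrow> 'a set \<Rightarrow> bool" where
  "stable_under I act G' J \<longleftrightarrow> (\<forall>\<alpha>\<in>BW_basis I. \<forall>g\<in>G'. \<forall>a\<in>J. act \<alpha> g a \<in> J)"

definition D_simple :: "'i set \<Rightarrow> ('a, 'b) ring_scheme \<Rightarrow> ('i mon \<Rightarrow> 'g \<Rightarrow> 'a \<Rightarrow> 'a) \<Rightarrow> bool" where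
  "D_simple I R act \<longleftrightarrow>
     (\<forall>J. ideal J R \<and> stable_under I act UNIV J \<longrightarrow> J = {\<zero>\<^bsub>R\<^esub>} \<or> J = carrier R)"

definition min_primes :: "('a, 'b) ring_scheme \<Rightarrow> 'a set set" where
  "min_primes R = {P. primeideal P R \<and> (\<forall>Q. primeideal Q R \<and> Q \<subseteq> P \<longrightarrow> Q = P)}"

definition gpre :: "('a, 'b) ring_scheme \<Rightarrow> ('i mon \<Rightarrow> 'g \<Rightarrow> 'a \<Rightarrow> 'a) \<Rightarrow> 'g \<Rightarrow> 'a set \<Rightarrow> 'a set" where
  "gpre R act g P = {a \<in> carrier R. act 0 g a \<in> P}"

definition stabilizer :: "('a, 'b) ring_scheme \<Rightarrow> ('i mon \<Rightarrow> 'g \<Rightarrow> 'a \<Rightarrow> 'a) \<Rightarrow> 'a set \<Rightarrow> 'g set" where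
  "stabilizer R act P = {g. gpre R act g P = P}"

definition stabilizer_all :: "('a, 'b) ring_scheme \<Rightarrow> ('i mon \<Rightarrow> 'g \<Rightarrow> 'a \<Rightarrow> 'a) \<Rightarrow> 'g set" where
  "stabilizer_all R act = {g. \<forall>Q\<in>min_primes R. g \<in> stabilizer R act Q}"

text \<open>Induced action on R/P (well defined when P is stable):
  X = P +> x \<mapsto> P +> f x.\<close>
definition quot_act :: "('a, 'b) ring_scheme \<Rightarrow> 'a set \<Rightarrow> ('a \<Rightarrow> 'a) \<Rightarrow> 'a set \<Rightarrow> 'a set" where
  "quot_act R P f Y = a_r_coset R P (f (SOME y. y \<in> Y))"

definition quot_simple :: "'i set \<Rightarrow> ('a, 'b) ring_scheme \<Rightarrow> ('i mon \<Rightarrow> 'g \<Rightarrow> 'a \<Rightarrow> 'a)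
    \<Rightarrow> 'g set \<Rightarrow> 'a set \<Rightarrow> bool" where
  "quot_simple I R act G' P \<longleftrightarrow>
     (\<forall>J. ideal J (R Quot P) \<and>
          (\<forall>\<alpha>\<in>BW_basis I. \<forall>g\<in>G'. \<forall>Y\<in>J. quot_act R P (act \<alpha> g) Y \<in> J)
        \<longrightarrow> J = {\<zero>\<^bsub>R Quot P\<^esub>} \<or> J = carrier (R Quot P))"

definition prod_quot :: "('a, 'b) ring_scheme \<Rightarrow> 'a set set \<Rightarrow> ('a set \<Rightarrow> 'a set) ring" where
  "prod_quot R \<Omega> =
     \<lparr>carrier = (\<Pi>\<^sub>E P\<in>\<Omega>. carrier (R Quot P)),
      Group.monoid.mult = (\<lambda>x y. \<lambda>P\<in>\<Omega>. x P \<otimes>\<^bsub>R Quot P\<^esub> y P),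
      Group.monoid.one = (\<lambda>P\<in>\<Omega>. \<one>\<^bsub>R Quot P\<^esub>),
      Ring.ring.zero = (\<lambda>P\<in>\<Omega>. \<zero>\<^bsub>R Quot P\<^esub>),
      Ring.ring.add = (\<lambda>x y. \<lambda>P\<in>\<Omega>. x P \<oplus>\<^bsub>R Quot P\<^esub> y P)\<rparr>"

end

theory Submission
  imports Defs
begin

lemma lookup_pmap: "Poly_Mapping.lookup (Poly_Mapping.map g p) k =
   (if Poly_Mapping.lookup p k = 0 then 0 else g (Poly_Mapping.lookup p k))"
  by (simp add: Poly_Mapping.map.rep_eq when_def)

lemma keys_bvec [simp]: "Poly_Mapping.keys (bvec \<alpha> :: ('i,'c::comm_ring_1) vec) = {\<alpha>}"
  by (simp add: bvec_def)

lemma lookup_bvec: "Poly_Mapping.lookup (bvec \<alpha> :: ('i,'c::comm_ring_1) vec) \<beta> = (if \<beta> = \<alpha> then 1 else 0)"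
  by (simp add: bvec_def lookup_single)

lemma map_mult1: "Poly_Mapping.map (\<lambda>c. c) p = p"
  by (rule poly_mapping_eqI) (simp add: lookup_pmap)

lemma vlin_bvec [simp]: "vlin f (bvec \<alpha> :: ('i,'c::comm_ring_1) vec) = f \<alpha>"
  by (simp add: vlin_def lookup_bvec map_mult1)

lemma vmult_bvec_bvec [simp]: "vmult m (bvec \<alpha>) (bvec \<beta>) = m \<alpha> \<beta>"
  by (simp add: vmult_def)

lemma vlin_cong: "(\<And>\<alpha>. \<alpha> \<in> Poly_Mapping.keys u \<Longrightarrow> f \<alpha> = g \<alpha>) \<Longrightarrow> vlin f u = vlin g u"
  by (simp add: vlin_def)

lemma vlin_bvec_id: "vlin bvec (u :: ('i,'c::comm_ring_1) vec) = u"
proof (rule poly_mapping_eqI)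
  fix k
  have "Poly_Mapping.lookup (vlin bvec u) k =
     (\<Sum>\<alpha>\<in>Poly_Mapping.keys u. Poly_Mapping.lookup (Poly_Mapping.map (\<lambda>c. Poly_Mapping.lookup u \<alpha> * c) (bvec \<alpha>)) k)"
    by (simp add: vlin_def lookup_sum)
  also have "\<dots> = (\<Sum>\<alpha>\<in>Poly_Mapping.keys u. if \<alpha> = k then Poly_Mapping.lookup u \<alpha> else 0)"
    by (rule sum.cong) (auto simp: lookup_pmap lookup_bvec)
  also have "\<dots> = Poly_Mapping.lookup u k"
    by (cases "k \<in> Poly_Mapping.keys u") (auto simp: in_keys_iff)
  finally show "Poly_Mapping.lookup (vlin bvec u) k = Poly_Mapping.lookup u k" .
qed

lemma keys_pmap_sub: "Poly_Mapping.keys (Poly_Mapping.map g p) \<subseteq> Poly_Mapping.keys p"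
  by (auto simp: in_keys_iff lookup_pmap split: if_splits)

lemma keys_vlin: "Poly_Mapping.keys (vlin f u) \<subseteq> (\<Union>\<alpha>\<in>Poly_Mapping.keys u. Poly_Mapping.keys (f \<alpha>))"
proof -
  have "Poly_Mapping.keys (vlin f u) \<subseteq> (\<Union>\<alpha>\<in>Poly_Mapping.keys u. Poly_Mapping.keys (Poly_Mapping.map (\<lambda>c. Poly_Mapping.lookup u \<alpha> * c) (f \<alpha>)))"
    unfolding vlin_def by (rule keys_sum)
  also have "\<dots> \<subseteq> (\<Union>\<alpha>\<in>Poly_Mapping.keys u. Poly_Mapping.keys (f \<alpha>))"
    by (intro UN_mono) (auto intro: keys_pmap_sub[THEN subsetD])
  finally show ?thesis .
qed

lemma keys_vmult: "Poly_Mapping.keys (vmult m u v) \<subseteq>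
   (\<Union>\<alpha>\<in>Poly_Mapping.keys u. \<Union>\<beta>\<in>Poly_Mapping.keys v. Poly_Mapping.keys (m \<alpha> \<beta>))"
proof -
  have "Poly_Mapping.keys (vmult m u v) \<subseteq> (\<Union>\<alpha>\<in>Poly_Mapping.keys u. Poly_Mapping.keys (vlin (m \<alpha>) v))"
    unfolding vmult_def by (rule keys_vlin)
  also have "\<dots> \<subseteq> (\<Union>\<alpha>\<in>Poly_Mapping.keys u. \<Union>\<beta>\<in>Poly_Mapping.keys v. Poly_Mapping.keys (m \<alpha> \<beta>))"
    by (intro UN_mono) (auto intro: keys_vlin[THEN subsetD])
  finally show ?thesis .
qed

lemma finite_below:
  "finite {\<beta> :: 'i \<Rightarrow>\<^sub>0 nat. \<forall>k. Poly_Mapping.lookup \<beta> k \<le> Poly_Mapping.lookup \<alpha> k}"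
proof -
  let ?S = "{\<beta> :: 'i \<Rightarrow>\<^sub>0 nat. \<forall>k. Poly_Mapping.lookup \<beta> k \<le> Poly_Mapping.lookup \<alpha> k}"
  let ?h = "\<lambda>\<beta>::'i \<Rightarrow>\<^sub>0 nat. restrict (Poly_Mapping.lookup \<beta>) (Poly_Mapping.keys \<alpha>)"
  have "inj_on ?h ?S"
  proof (rule inj_onI)
    fix x y assume x: "x \<in> ?S" and y: "y \<in> ?S" and e: "?h x = ?h y"
    show "x = y"
    proof (rule poly_mapping_eqI)
      fix k show "Poly_Mapping.lookup x k = Poly_Mapping.lookup y k"
      proof (cases "k \<in> Poly_Mapping.keys \<alpha>")
        case True thus ?thesis using fun_cong[OF e, of k] by simp
      next
        case False
        then have "Poly_Mapping.lookup \<alpha> k = 0" by (simp add: in_keys_iff)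
        moreover have "Poly_Mapping.lookup x k \<le> Poly_Mapping.lookup \<alpha> k" using x by simp
        moreover have "Poly_Mapping.lookup y k \<le> Poly_Mapping.lookup \<alpha> k" using y by simp
        ultimately show ?thesis by simp
      qed
    qed
  qed
  moreover have "?h ` ?S \<subseteq> PiE (Poly_Mapping.keys \<alpha>) (\<lambda>k. {0..Poly_Mapping.lookup \<alpha> k})"
  proof (rule image_subsetI)
    fix \<beta> assume "\<beta> \<in> ?S"
    then show "?h \<beta> \<in> PiE (Poly_Mapping.keys \<alpha>) (\<lambda>k. {0..Poly_Mapping.lookup \<alpha> k})"
      by (simp add: restrict_PiE_iff)
  qed
  moreover have "finite (PiE (Poly_Mapping.keys \<alpha>) (\<lambda>k. {0..Poly_Mapping.lookup \<alpha> k}))"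
    by (rule finite_PiE) auto
  ultimately have "finite (?h ` ?S)" by (meson finite_subset)
  then show ?thesis using \<open>inj_on ?h ?S\<close> by (rule finite_imageD)
qed

lemma finite_splits: "finite (splits (\<alpha> :: 'i \<Rightarrow>\<^sub>0 nat))"
proof -
  have "splits \<alpha> \<subseteq> (\<lambda>\<beta>. (\<beta>, \<alpha> - \<beta>)) ` {\<beta>. \<forall>k. Poly_Mapping.lookup \<beta> k \<le> Poly_Mapping.lookup \<alpha> k}"
  proof
    fix p assume "p \<in> splits \<alpha>"
    then obtain \<beta> \<gamma> where p: "p = (\<beta>, \<gamma>)" "\<beta> + \<gamma> = \<alpha>" by (auto simp: splits_def)
    then have "\<gamma> = \<alpha> - \<beta>" by auto
    moreover have "\<forall>k. Poly_Mapping.lookup \<beta> k \<le> Poly_Mapping.lookup \<alpha> k"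
    proof
      fix k
      have "Poly_Mapping.lookup \<alpha> k = Poly_Mapping.lookup \<beta> k + Poly_Mapping.lookup \<gamma> k"
        using p(2) lookup_add by metis
      then show "Poly_Mapping.lookup \<beta> k \<le> Poly_Mapping.lookup \<alpha> k" by simp
    qed
    ultimately show "p \<in> (\<lambda>\<beta>. (\<beta>, \<alpha> - \<beta>)) ` {\<beta>. \<forall>k. Poly_Mapping.lookup \<beta> k \<le> Poly_Mapping.lookup \<alpha> k}"
      using p by auto
  qed
  moreover have "finite ((\<lambda>\<beta>. (\<beta>, \<alpha> - \<beta>)) ` {\<beta>. \<forall>k. Poly_Mapping.lookup \<beta> k \<le> Poly_Mapping.lookup \<alpha> k})"
    using finite_below by (rule finite_imageI)
  ultimately show ?thesis by (rule finite_subset)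
qed

lemma pm_add_eq_0: "(a::'i \<Rightarrow>\<^sub>0 nat) + b = 0 \<Longrightarrow> a = 0 \<and> b = 0"
proof -
  assume h: "a + b = 0"
  have "\<forall>k. Poly_Mapping.lookup a k + Poly_Mapping.lookup b k = 0"
    using h by (metis lookup_add lookup_zero)
  then show ?thesis by (simp add: poly_mapping_eq_iff fun_eq_iff)
qed

lemma splits_zero: "splits (0 :: 'i \<Rightarrow>\<^sub>0 nat) = {(0,0)}"
  by (auto simp: splits_def dest: pm_add_eq_0)



lemma (in ring) finsum_ideal:
  assumes J: "ideal J R" and fin: "finite A" and f: "\<And>x. x \<in> A \<Longrightarrow> f x \<in> J"
  shows "finsum R f A \<in> J"
  using fin f
proof (induction A rule: finite_induct)
  case empty
  then show ?case using J by (simp add: additive_subgroup.zero_closed ideal.axioms(1))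
next
  case (insert x F)
  have sub: "J \<subseteq> carrier R" using J by (simp add: ideal.axioms(1) additive_subgroup.a_subset)
  have "f \<in> F \<rightarrow> carrier R" using insert sub by auto
  moreover have "f x \<in> carrier R" using insert sub by auto
  ultimately have "finsum R f (insert x F) = f x \<oplus> finsum R f F"
    using insert by (simp add: finsum_insert)
  moreover have "finsum R f F \<in> J" using insert by auto
  ultimately show ?case using insert J
    by (simp add: additive_subgroup.a_closed ideal.axioms(1))
qed

locale thm10 = cring R for R :: "('a, 'b) ring_scheme" (structure) +
  fixes I :: "'i set"
    and m :: "'i mon \<Rightarrow> 'i mon \<Rightarrow> ('i, 'c::field) vec"
    and gact :: "'g::monoid_mult \<Rightarrow> 'i mon \<Rightarrow> ('i, 'c) vec"
    and smul :: "'c \<Rightarrow> 'a \<Rightarrow> 'a"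
    and act :: "'i mon \<Rightarrow> 'g \<Rightarrow> 'a \<Rightarrow> 'a"
  assumes hopf: "BW_hopf I m"
    and CG: "CG_module_algebra I m gact"
    and modalg: "D_module_algebra I m gact R smul act"
    and noeth: "noetherian_ring R"
    and simple: "D_simple I R act"
    and inj: "\<And>g. inj_on (act 0 g) (carrier R)"
begin

lemma BW0[simp]: "0 \<in> BW_basis I"
  by (simp add: BW_basis_def)

lemma keys_le_add: "Poly_Mapping.keys \<beta> \<subseteq> Poly_Mapping.keys (\<beta> + (\<gamma> :: 'i mon))"
proof
  fix k assume "k \<in> Poly_Mapping.keys \<beta>"
  then have "Poly_Mapping.lookup \<beta> k \<noteq> 0" by (simp add: in_keys_iff)
  moreover have "Poly_Mapping.lookup (\<beta> + \<gamma>) k = Poly_Mapping.lookup \<beta> k + Poly_Mapping.lookup \<gamma> k"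
    by (rule lookup_add)
  ultimately show "k \<in> Poly_Mapping.keys (\<beta> + \<gamma>)" by (simp add: in_keys_iff)
qed

lemma BW_split: "\<beta> + \<gamma> \<in> BW_basis I \<Longrightarrow> \<beta> \<in> BW_basis I \<and> \<gamma> \<in> BW_basis I"
proof -
  assume h: "\<beta> + \<gamma> \<in> BW_basis I"
  have "\<gamma> + \<beta> = \<beta> + \<gamma>" by (rule add.commute)
  then have "Poly_Mapping.keys \<gamma> \<subseteq> Poly_Mapping.keys (\<beta> + \<gamma>)" using keys_le_add[of \<gamma> \<beta>] by simp
  moreover have "Poly_Mapping.keys \<beta> \<subseteq> Poly_Mapping.keys (\<beta> + \<gamma>)" by (rule keys_le_add)
  ultimately show ?thesis using h unfolding BW_basis_def by blast
qed

lemma BW_splits: "\<alpha> \<in> BW_basis I \<Longrightarrow> (\<beta>, \<gamma>) \<in> splits \<alpha> \<Longrightarrow> \<beta> \<in> BW_basis I \<and> \<gamma> \<in> BW_basis I"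
  unfolding splits_def using BW_split by blast

lemma BW_plus: "\<beta> \<in> BW_basis I \<Longrightarrow> \<gamma> \<in> BW_basis I \<Longrightarrow> \<beta> + \<gamma> \<in> BW_basis I"
  unfolding BW_basis_def using keys_add[of \<beta> \<gamma>] by blast

lemma Calg: "C_algebra R smul"
  using modalg by (simp add: D_module_algebra_def)

lemma smul_closed: "a \<in> carrier R \<Longrightarrow> smul c a \<in> carrier R"
  using Calg by (simp add: C_algebra_def)

lemma smul_one: "a \<in> carrier R \<Longrightarrow> smul 1 a = a"
  using Calg by (simp add: C_algebra_def)

lemma smul_mult: "a \<in> carrier R \<Longrightarrow> b \<in> carrier R \<Longrightarrow> smul c (a \<otimes> b) = smul c a \<otimes> b"
  using Calg by (simp add: C_algebra_def)

lemma act_closed: "\<alpha> \<in> BW_basis I \<Longrightarrow> a \<in> carrier R \<Longrightarrow> act \<alpha> g a \<in> carrier R"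
  using modalg by (simp add: D_module_algebra_def)

lemma act_add: "\<alpha> \<in> BW_basis I \<Longrightarrow> a \<in> carrier R \<Longrightarrow> b \<in> carrier R \<Longrightarrow>
   act \<alpha> g (a \<oplus> b) = act \<alpha> g a \<oplus> act \<alpha> g b"
  using modalg by (simp add: D_module_algebra_def)

lemma act_zero: "\<alpha> \<in> BW_basis I \<Longrightarrow> act \<alpha> g \<zero> = \<zero>"
proof -
  assume a: "\<alpha> \<in> BW_basis I"
  have "act \<alpha> g \<zero> = act \<alpha> g (\<zero> \<oplus> \<zero>)" by simp
  also have "\<dots> = act \<alpha> g \<zero> \<oplus> act \<alpha> g \<zero>" by (rule act_add[OF a]) simp_all
  finally have e: "act \<alpha> g \<zero> \<oplus> \<zero> = act \<alpha> g \<zero> \<oplus> act \<alpha> g \<zero>"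
    using act_closed[OF a, of \<zero> g] by simp
  show ?thesis using add.l_cancel[OF _ _ _ ] e act_closed[OF a, of \<zero> g]
    by (metis zero_closed)
qed

lemma act_neg: "\<alpha> \<in> BW_basis I \<Longrightarrow> a \<in> carrier R \<Longrightarrow> act \<alpha> g (\<ominus> a) = \<ominus> act \<alpha> g a"
proof -
  assume a: "\<alpha> \<in> BW_basis I" and x: "a \<in> carrier R"
  have "act \<alpha> g (\<ominus> a) \<oplus> act \<alpha> g a = \<zero>"
    using act_add[OF a, of "\<ominus> a" a g] x act_zero[OF a] by (simp add: l_neg)
  then show ?thesis using act_closed[OF a] x
    by (metis a_inv_closed minus_equality)
qed

lemma act_minus: "\<alpha> \<in> BW_basis I \<Longrightarrow> a \<in> carrier R \<Longrightarrow> b \<in> carrier R \<Longrightarrow>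
   act \<alpha> g (a \<ominus> b) = act \<alpha> g a \<ominus> act \<alpha> g b"
  by (simp add: a_minus_def act_add act_neg)

lemma act01: "a \<in> carrier R \<Longrightarrow> act 0 1 a = a"
  using modalg by (simp add: D_module_algebra_def)

lemma act_comp: "\<alpha> \<in> BW_basis I \<Longrightarrow> \<beta> \<in> BW_basis I \<Longrightarrow> a \<in> carrier R \<Longrightarrow>
   act \<alpha> g (act \<beta> h a) = vact R smul act (vmult m (bvec \<alpha>) (gact g \<beta>)) (g * h) a"
  using modalg by (simp add: D_module_algebra_def)

lemma leib: "\<alpha> \<in> BW_basis I \<Longrightarrow> a \<in> carrier R \<Longrightarrow> b \<in> carrier R \<Longrightarrow>
   act \<alpha> g (a \<otimes> b) = finsum R (\<lambda>(\<beta>, \<gamma>). act \<beta> g a \<otimes> act \<gamma> g b) (splits \<alpha>)"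
  using modalg by (simp add: D_module_algebra_def)

lemma act_one: "\<alpha> \<in> BW_basis I \<Longrightarrow> act \<alpha> g \<one> = (if \<alpha> = 0 then \<one> else \<zero>)"
  using modalg by (simp add: D_module_algebra_def)

lemma gact0: "gact g 0 = bvec 0"
  using CG by (simp add: CG_module_algebra_def)

lemma gact1: "\<alpha> \<in> BW_basis I \<Longrightarrow> gact 1 \<alpha> = bvec \<alpha>"
  using CG by (simp add: CG_module_algebra_def)

lemma gact_keys: "\<alpha> \<in> BW_basis I \<Longrightarrow> Poly_Mapping.keys (gact g \<alpha>) \<subseteq> BW_basis I"
  using CG by (simp add: CG_module_algebra_def)

lemma m_keys: "\<alpha> \<in> BW_basis I \<Longrightarrow> \<beta> \<in> BW_basis I \<Longrightarrow> Poly_Mapping.keys (m \<alpha> \<beta>) \<subseteq> BW_basis I"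
  using hopf by (simp add: BW_hopf_def)

lemma m_unit: "\<alpha> \<in> BW_basis I \<Longrightarrow> m 0 \<alpha> = bvec \<alpha> \<and> m \<alpha> 0 = bvec \<alpha>"
  using hopf by (simp add: BW_hopf_def)

lemma vact_bvec: "\<alpha> \<in> BW_basis I \<Longrightarrow> a \<in> carrier R \<Longrightarrow> vact R smul act (bvec \<alpha>) g a = act \<alpha> g a"
  by (simp add: vact_def lookup_bvec smul_one act_closed)

lemma smul_ideal: "ideal J R \<Longrightarrow> x \<in> J \<Longrightarrow> smul c x \<in> J"
proof -
  assume J: "ideal J R" and x: "x \<in> J"
  have xc: "x \<in> carrier R" using J x by (meson ideal.Icarr)
  have "smul c x = smul c (\<one> \<otimes> x)" using xc by simp
  also have "\<dots> = smul c \<one> \<otimes> x" using smul_mult[of \<one> x c] xc by simp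
  finally show ?thesis using J x smul_closed[of \<one> c] by (simp add: ideal.I_l_closed)
qed

lemma vact_ideal:
  assumes J: "ideal J R" and keys: "Poly_Mapping.keys v \<subseteq> BW_basis I" and a: "a \<in> carrier R"
    and h: "\<And>\<gamma>. \<gamma> \<in> BW_basis I \<Longrightarrow> act \<gamma> g a \<in> J"
  shows "vact R smul act v g a \<in> J"
  unfolding vact_def
  by (rule finsum_ideal[OF J]) (use keys h smul_ideal[OF J] in auto)

lemma act_split: "\<alpha> \<in> BW_basis I \<Longrightarrow> a \<in> carrier R \<Longrightarrow> act \<alpha> g a = act \<alpha> 1 (act 0 g a)"
  by (simp add: act_comp gact0 m_unit vact_bvec)

lemma act0_comp: "a \<in> carrier R \<Longrightarrow> act 0 g (act 0 h a) = act 0 (g * h) a"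
  by (simp add: act_comp gact0 m_unit vact_bvec)

lemma comp_ideal:
  assumes J: "ideal J R" and ab: "\<alpha> \<in> BW_basis I" "\<beta> \<in> BW_basis I" and a: "a \<in> carrier R"
    and h: "\<And>\<gamma>. \<gamma> \<in> BW_basis I \<Longrightarrow> act \<gamma> (g * h) a \<in> J"
  shows "act \<alpha> g (act \<beta> h a) \<in> J"
proof -
  have "Poly_Mapping.keys (vmult m (bvec \<alpha>) (gact g \<beta>)) \<subseteq> BW_basis I"
    using keys_vmult[of m "bvec \<alpha>" "gact g \<beta>"] gact_keys[OF ab(2), of g] m_keys ab(1) by fastforce
  then show ?thesis using act_comp[OF ab a] vact_ideal[OF J _ a h] by simp
qed

lemma leib_ideal:
  assumes J: "ideal J R" and \<alpha>: "\<alpha> \<in> BW_basis I" and ab: "a \<in> carrier R" "b \<in> carrier R"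
    and h: "\<And>\<beta> \<gamma>. (\<beta>, \<gamma>) \<in> splits \<alpha> \<Longrightarrow> act \<beta> g a \<otimes> act \<gamma> g b \<in> J"
  shows "act \<alpha> g (a \<otimes> b) \<in> J"
proof -
  have "finsum R (\<lambda>(\<beta>, \<gamma>). act \<beta> g a \<otimes> act \<gamma> g b) (splits \<alpha>) \<in> J"
    by (rule finsum_ideal[OF J finite_splits]) (use h in auto)
  then show ?thesis using leib[OF \<alpha> ab] by simp
qed

lemma act0_mult: "a \<in> carrier R \<Longrightarrow> b \<in> carrier R \<Longrightarrow> act 0 g (a \<otimes> b) = act 0 g a \<otimes> act 0 g b"
  using leib[of 0 a b g] by (simp add: splits_zero act_closed)

lemma act0_hom: "act 0 g \<in> ring_hom R R"
  by (rule ring_hom_memI) (auto simp: act_closed act0_mult act_add act_one)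

end


context thm10
begin

definition colon :: "'a set \<Rightarrow> 'a set \<Rightarrow> 'a set" where
  "colon M S = {x \<in> carrier R. \<forall>z\<in>S. x \<otimes> z \<in> M}"

lemma colon_ideal:
  assumes M: "ideal M R" and S: "S \<subseteq> carrier R"
  shows "ideal (colon M S) R"
proof (rule idealI)
  show "ring R" by (rule ring_axioms)
  have Mc: "M \<subseteq> carrier R" using M by (meson ideal.Icarr subsetI)
  show "subgroup (colon M S) (add_monoid R)"
  proof (rule add.subgroupI)
    show "colon M S \<subseteq> carrier R" by (auto simp: colon_def)
    show "colon M S \<noteq> {}"
    proof -
      have "\<zero> \<in> colon M S" using S M
        by (auto simp: colon_def additive_subgroup.zero_closed ideal.axioms(1) subset_iff)
      then show ?thesis by blast
    qed
    fix a b assume a: "a \<in> colon M S" and b: "b \<in> colon M S"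
    show "\<ominus> a \<in> colon M S"
    proof -
      have ac: "a \<in> carrier R" using a by (simp add: colon_def)
      have "\<forall>z\<in>S. (\<ominus> a) \<otimes> z \<in> M"
      proof
        fix z assume z: "z \<in> S"
        then have zc: "z \<in> carrier R" using S by blast
        have "(\<ominus> a) \<otimes> z = \<ominus> (a \<otimes> z)" using ac zc by (simp add: l_minus)
        moreover have "a \<otimes> z \<in> M" using a z by (simp add: colon_def)
        ultimately show "(\<ominus> a) \<otimes> z \<in> M" using M
          by (simp add: additive_subgroup.a_inv_closed ideal.axioms(1))
      qed
      then show ?thesis using ac by (simp add: colon_def)
    qed
    show "a \<oplus> b \<in> colon M S"
    proof -
      have ac: "a \<in> carrier R" "b \<in> carrier R" using a b by (auto simp: colon_def)
      have "\<forall>z\<in>S. (a \<oplus> b) \<otimes> z \<in> M"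
      proof
        fix z assume z: "z \<in> S"
        then have zc: "z \<in> carrier R" using S by blast
        have "(a \<oplus> b) \<otimes> z = a \<otimes> z \<oplus> b \<otimes> z" using ac zc by (simp add: l_distr)
        moreover have "a \<otimes> z \<in> M" "b \<otimes> z \<in> M" using a b z by (auto simp: colon_def)
        ultimately show "(a \<oplus> b) \<otimes> z \<in> M" using M
          by (simp add: additive_subgroup.a_closed ideal.axioms(1))
      qed
      then show ?thesis using ac by (simp add: colon_def)
    qed
  qed
  fix a x assume a: "a \<in> colon M S" and x: "x \<in> carrier R"
  have ac: "a \<in> carrier R" using a by (simp add: colon_def)
  have "\<forall>z\<in>S. (x \<otimes> a) \<otimes> z \<in> M"
  proof
    fix z assume z: "z \<in> S"
    then have zc: "z \<in> carrier R" using S by blast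
    have "(x \<otimes> a) \<otimes> z = x \<otimes> (a \<otimes> z)" using ac zc x by (simp add: m_assoc)
    moreover have "a \<otimes> z \<in> M" using a z by (simp add: colon_def)
    ultimately show "(x \<otimes> a) \<otimes> z \<in> M" using M x by (simp add: ideal.I_l_closed)
  qed
  then show "x \<otimes> a \<in> colon M S" using ac x by (simp add: colon_def)
  then show "a \<otimes> x \<in> colon M S" using ac x by (simp add: m_comm)
qed

lemma prime_pow:
  assumes Q: "primeideal Q R" and y: "y \<in> carrier R" and n: "y [^] (n::nat) \<in> Q"
  shows "y \<in> Q"
  using n
proof (induction n)
  case 0
  then have "\<one> \<in> Q" by simp
  then have "Q = carrier R" using Q by (simp add: ideal.one_imp_carrier primeideal.axioms(1))
  then show ?case using primeideal.I_notcarr[OF Q] by simp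
next
  case (Suc n)
  then have "y [^] n \<otimes> y \<in> Q" by simp
  then have "y [^] n \<in> Q \<or> y \<in> Q" using Q y by (simp add: primeideal.I_prime)
  then show ?case using Suc by blast
qed

lemma prime_finprod_notin:
  assumes Q: "primeideal Q R" and F: "finite F" and x: "\<And>P. P \<in> F \<Longrightarrow> x P \<in> carrier R - Q"
  shows "finprod R x F \<notin> Q"
  using F x
proof (induction F rule: finite_induct)
  case empty
  have "\<one> \<notin> Q"
  proof
    assume "\<one> \<in> Q"
    then have "Q = carrier R" using Q by (simp add: ideal.one_imp_carrier primeideal.axioms(1))
    then show False using primeideal.I_notcarr[OF Q] by simp
  qed
  then show ?case by simp
next
  case (insert a F)
  have "x \<in> F \<rightarrow> carrier R" using insert by auto
  moreover have xa: "x a \<in> carrier R" using insert by auto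
  ultimately have e: "finprod R x (insert a F) = x a \<otimes> finprod R x F"
    using insert by (simp add: finprod_insert)
  have "finprod R x F \<notin> Q" using insert by auto
  moreover have "x a \<notin> Q" using insert by auto
  moreover have "finprod R x F \<in> carrier R" using \<open>x \<in> F \<rightarrow> carrier R\<close> by (rule finprod_closed)
  ultimately show ?case using e Q xa by (metis primeideal.I_prime)
qed

lemma finprod_in_ideal:
  assumes P: "ideal P R" and F: "finite F" and x: "x \<in> F \<rightarrow> carrier R" and a: "a \<in> F" "x a \<in> P"
  shows "finprod R x F \<in> P"
proof -
  have "F = insert a (F - {a})" using a by blast
  then have "finprod R x F = x a \<otimes> finprod R x (F - {a})"
    using F x a by (metis finite_Diff finprod_insert Diff_iff singletonI Pi_split_insert_domain)
  moreover have "finprod R x (F - {a}) \<in> carrier R" using x by (auto intro: finprod_closed)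
  ultimately show ?thesis using a P by (simp add: ideal.I_r_closed)
qed

lemma avoid:
  assumes Q: "primeideal Q R" and F: "finite F" and Fi: "\<And>P. P \<in> F \<Longrightarrow> ideal P R"
    and h: "\<And>y. y \<in> carrier R \<Longrightarrow> (\<forall>P\<in>F. y \<in> P) \<Longrightarrow> y \<in> Q"
  shows "\<exists>P\<in>F. P \<subseteq> Q"
proof (rule ccontr)
  assume "\<not> (\<exists>P\<in>F. P \<subseteq> Q)"
  then have "\<forall>P\<in>F. \<exists>y. y \<in> P \<and> y \<notin> Q" by blast
  then obtain x where x: "\<And>P. P \<in> F \<Longrightarrow> x P \<in> P \<and> x P \<notin> Q" by metis
  have xc: "\<And>P. P \<in> F \<Longrightarrow> x P \<in> carrier R" using x Fi by (meson ideal.Icarr)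
  have "finprod R x F \<notin> Q" using prime_finprod_notin[OF Q F] x xc by blast
  moreover have "finprod R x F \<in> carrier R" using xc by (auto intro: finprod_closed)
  moreover have "\<forall>P\<in>F. finprod R x F \<in> P"
    using finprod_in_ideal[OF Fi F] xc x by blast
  ultimately show False using h by blast
qed

end


context thm10
begin

definition good :: "'a set \<Rightarrow> bool" where
  "good J \<longleftrightarrow> (\<exists>F. finite F \<and> (\<forall>P\<in>F. primeideal P R \<and> J \<subseteq> P) \<and>
      (\<forall>y\<in>carrier R. (\<forall>P\<in>F. y \<in> P) \<longrightarrow> (\<exists>n::nat. y [^] n \<in> J)))"

lemma noeth_rad: "ideal J R \<Longrightarrow> good J"
proof (rule ccontr)
  assume J: "ideal J R" "\<not> good J"
  define B where "B = {J. ideal J R \<and> \<not> good J}"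
  have "B \<noteq> {}" using J by (auto simp: B_def)
  have "\<exists>M\<in>B. \<forall>Y\<in>B. M \<subseteq> Y \<longrightarrow> Y = M"
  proof (rule subset_Zorn_nonempty[OF \<open>B \<noteq> {}\<close>])
    fix C assume C: "C \<noteq> {}" "subset.chain B C"
    then have "subset.chain {I. ideal I R} C"
      unfolding pred_on.chain_def B_def by blast
    then have "\<Union>C \<in> C" using noetherian_ring.ideal_chain_is_trivial[OF noeth C(1)] by blast
    then show "\<Union>C \<in> B" using C(2) unfolding pred_on.chain_def by blast
  qed
  then obtain M where M: "M \<in> B" and Mmax: "\<And>Y. Y \<in> B \<Longrightarrow> M \<subseteq> Y \<Longrightarrow> Y = M" by blast
  have Mi: "ideal M R" and Mg: "\<not> good M" using M by (auto simp: B_def)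
  have Mc: "M \<subseteq> carrier R" using Mi by (meson ideal.Icarr subsetI)
  have bigger_good: "good Y" if X: "ideal Y R" "M \<subseteq> Y" "Y \<noteq> M" for Y
    using Mmax[of Y] X by (auto simp: B_def)
  have "M \<noteq> carrier R"
  proof
    assume "M = carrier R"
    then have "good M" unfolding good_def
      by (rule_tac x="{}" in exI) (auto intro: exI[of _ 1])
    then show False using Mg by simp
  qed
  have "\<not> primeideal M R"
  proof
    assume "primeideal M R"
    then have "good M" unfolding good_def
      by (rule_tac x="{M}" in exI) (auto intro: exI[of _ 1])
    then show False using Mg by simp
  qed
  then obtain a b where ab: "a \<in> carrier R" "b \<in> carrier R" "a \<otimes> b \<in> M" "a \<notin> M" "b \<notin> M"
    using \<open>M \<noteq> carrier R\<close> Mi by (metis is_cring primeideal.intro primeideal_axioms.intro)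
  define M1 where "M1 = Idl (insert a M)"
  define M2 where "M2 = Idl (insert b M)"
  have M1i: "ideal M1 R" using ab Mc by (simp add: M1_def genideal_ideal)
  have M2i: "ideal M2 R" using ab Mc by (simp add: M2_def genideal_ideal)
  have M1s: "insert a M \<subseteq> M1" unfolding M1_def by (rule genideal_self) (use ab Mc in auto)
  have M2s: "insert b M \<subseteq> M2" unfolding M2_def by (rule genideal_self) (use ab Mc in auto)
  have "good M1" using bigger_good[OF M1i] M1s ab by blast
  then obtain F1 where F1: "finite F1" "\<forall>P\<in>F1. primeideal P R \<and> M1 \<subseteq> P"
      "\<forall>y\<in>carrier R. (\<forall>P\<in>F1. y \<in> P) \<longrightarrow> (\<exists>n::nat. y [^] n \<in> M1)"
    unfolding good_def by blast
  have "good M2" using bigger_good[OF M2i] M2s ab by blast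
  then obtain F2 where F2: "finite F2" "\<forall>P\<in>F2. primeideal P R \<and> M2 \<subseteq> P"
      "\<forall>y\<in>carrier R. (\<forall>P\<in>F2. y \<in> P) \<longrightarrow> (\<exists>n::nat. y [^] n \<in> M2)"
    unfolding good_def by blast
  have M2col: "M2 \<subseteq> colon M {a}"
    unfolding M2_def
  proof (rule genideal_minimal)
    show "ideal (colon M {a}) R" using colon_ideal[OF Mi] ab by simp
    show "insert b M \<subseteq> colon M {a}"
    proof
      fix x assume "x \<in> insert b M"
      then show "x \<in> colon M {a}"
      proof
        assume "x = b" then show ?thesis using ab by (simp add: colon_def m_comm)
      next
        assume "x \<in> M" then show ?thesis using ab Mi Mc by (auto simp: colon_def ideal.I_r_closed)
      qed
    qed
  qed
  have M1col: "M1 \<subseteq> colon M M2"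
    unfolding M1_def
  proof (rule genideal_minimal)
    have "M2 \<subseteq> carrier R" using M2i by (meson ideal.Icarr subsetI)
    then show "ideal (colon M M2) R" using colon_ideal[OF Mi] by simp
    show "insert a M \<subseteq> colon M M2"
    proof
      fix x assume "x \<in> insert a M"
      then show "x \<in> colon M M2"
      proof
        assume "x = a"
        show ?thesis unfolding colon_def
        proof (safe)
          show "x \<in> carrier R" using ab \<open>x = a\<close> by simp
          fix z assume z: "z \<in> M2"
          then have "z \<otimes> a \<in> M" using M2col by (auto simp: colon_def)
          moreover have "z \<in> carrier R" using z M2i by (meson ideal.Icarr)
          ultimately show "x \<otimes> z \<in> M" using \<open>x = a\<close> ab by (simp add: m_comm)
        qed
      next
        assume x: "x \<in> M"
        show ?thesis unfolding colon_def
        proof (safe)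
          show "x \<in> carrier R" using x Mc by blast
          fix z assume z: "z \<in> M2"
          moreover have "z \<in> carrier R" using z M2i by (meson ideal.Icarr)
          ultimately show "x \<otimes> z \<in> M" using x Mi by (simp add: ideal.I_r_closed)
        qed
      qed
    qed
  qed
  have f: "finite (F1 \<union> F2)" using F1 F2 by simp
  have p: "\<forall>P\<in>F1 \<union> F2. primeideal P R \<and> M \<subseteq> P"
  proof
    fix P assume "P \<in> F1 \<union> F2"
    then show "primeideal P R \<and> M \<subseteq> P"
    proof
      assume "P \<in> F1" then show ?thesis using F1(2) M1s by blast
    next
      assume "P \<in> F2" then show ?thesis using F2(2) M2s by blast
    qed
  qed
  have n: "\<forall>y\<in>carrier R. (\<forall>P\<in>F1 \<union> F2. y \<in> P) \<longrightarrow> (\<exists>n::nat. y [^] n \<in> M)"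
  proof (intro ballI impI)
    fix y assume y: "y \<in> carrier R" and yP: "\<forall>P\<in>F1 \<union> F2. y \<in> P"
    obtain n1 :: nat where n1: "y [^] n1 \<in> M1" using F1(3) y yP by blast
    obtain n2 :: nat where n2: "y [^] n2 \<in> M2" using F2(3) y yP by blast
    have "y [^] (n1 + n2) = y [^] n1 \<otimes> y [^] n2" using y by (simp add: nat_pow_mult)
    moreover have "y [^] n1 \<otimes> y [^] n2 \<in> M"
    proof -
      have "y [^] n1 \<in> colon M M2" using n1 M1col by blast
      then show ?thesis using n2 unfolding colon_def by blast
    qed
    ultimately have "y [^] (n1 + n2) \<in> M" by simp
    then show "\<exists>n::nat. y [^] n \<in> M" by blast
  qed
  have "good M" unfolding good_def using f p n by blast
  then show False using Mg by simp
qed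

end


context thm10
begin

lemma F0_ex: "\<exists>F. finite F \<and> (\<forall>P\<in>F. primeideal P R) \<and>
   (\<forall>y\<in>carrier R. (\<forall>P\<in>F. y \<in> P) \<longrightarrow> (\<exists>n::nat. y [^] n = \<zero>))"
proof -
  have "good {\<zero>}" by (rule noeth_rad[OF zeroideal])
  then obtain F where F: "finite F" "\<forall>P\<in>F. primeideal P R \<and> {\<zero>} \<subseteq> P"
      "\<forall>y\<in>carrier R. (\<forall>P\<in>F. y \<in> P) \<longrightarrow> (\<exists>n::nat. y [^] n \<in> {\<zero>})"
    unfolding good_def by blast
  show ?thesis
  proof (rule exI[of _ F], intro conjI)
    show "finite F" by (rule F(1))
    show "\<forall>P\<in>F. primeideal P R" using F(2) by blast
    show "\<forall>y\<in>carrier R. (\<forall>P\<in>F. y \<in> P) \<longrightarrow> (\<exists>n::nat. y [^] n = \<zero>)" using F(3) by blast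
  qed
qed

lemma nilp_in_prime:
  assumes Q: "primeideal Q R" and y: "y \<in> carrier R" and n: "y [^] (n::nat) = \<zero>"
  shows "y \<in> Q"
proof -
  have "\<zero> \<in> Q" using Q by (simp add: additive_subgroup.zero_closed ideal.axioms(1) primeideal.axioms(1))
  then show ?thesis using prime_pow[OF Q y, of n] n by simp
qed

lemma prime_ideal: "primeideal P R \<Longrightarrow> ideal P R"
  by (simp add: primeideal.axioms(1))

lemma contains_F:
  assumes F: "finite F" "\<forall>P\<in>F. primeideal P R"
      "\<forall>y\<in>carrier R. (\<forall>P\<in>F. y \<in> P) \<longrightarrow> (\<exists>n::nat. y [^] n = \<zero>)"
    and Q: "primeideal Q R"
  shows "\<exists>P\<in>F. P \<subseteq> Q"
proof (rule avoid[OF Q F(1)])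
  show "\<And>P. P \<in> F \<Longrightarrow> ideal P R" using F(2) prime_ideal by blast
  fix y assume y: "y \<in> carrier R" "\<forall>P\<in>F. y \<in> P"
  then obtain n :: nat where "y [^] n = \<zero>" using F(3) by blast
  then show "y \<in> Q" using nilp_in_prime[OF Q y(1)] by blast
qed

lemma min_primeD: "P \<in> min_primes R \<Longrightarrow> primeideal P R"
  by (simp add: min_primes_def)

lemma min_primeD2: "P \<in> min_primes R \<Longrightarrow> primeideal Q R \<Longrightarrow> Q \<subseteq> P \<Longrightarrow> Q = P"
  by (simp add: min_primes_def)

lemma prime_contains_min:
  assumes Q: "primeideal Q R"
  shows "\<exists>P\<in>min_primes R. P \<subseteq> Q"
proof -
  obtain F where F: "finite F" "\<forall>P\<in>F. primeideal P R"
      "\<forall>y\<in>carrier R. (\<forall>P\<in>F. y \<in> P) \<longrightarrow> (\<exists>n::nat. y [^] n = \<zero>)"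
    using F0_ex by blast
  define S where "S = {P\<in>F. P \<subseteq> Q}"
  have "S \<noteq> {}" using contains_F[OF F Q] by (auto simp: S_def)
  moreover have "finite S" using F(1) by (simp add: S_def)
  ultimately obtain p where p: "p \<in> S" and pmin: "\<forall>b\<in>S. b \<le> p \<longrightarrow> p = b"
    using finite_has_minimal[of S] by blast
  have pp: "primeideal p R" using p F(2) by (simp add: S_def)
  have "p \<in> min_primes R"
    unfolding min_primes_def
  proof (intro CollectI conjI allI impI)
    show "primeideal p R" by (rule pp)
    fix Q' assume Q': "primeideal Q' R \<and> Q' \<subseteq> p"
    then obtain P' where P': "P' \<in> F" "P' \<subseteq> Q'" using contains_F[OF F] by blast
    then have "P' \<in> S" using Q' p by (auto simp: S_def)
    then have "p = P'" using pmin P'(2) Q' by blast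
    then show "Q' = p" using P' Q' by blast
  qed
  then show ?thesis using p by (auto simp: S_def)
qed

lemma min_primes_sub_F:
  assumes F: "finite F" "\<forall>P\<in>F. primeideal P R"
      "\<forall>y\<in>carrier R. (\<forall>P\<in>F. y \<in> P) \<longrightarrow> (\<exists>n::nat. y [^] n = \<zero>)"
  shows "min_primes R \<subseteq> F"
proof
  fix P assume P: "P \<in> min_primes R"
  then obtain P' where P': "P' \<in> F" "P' \<subseteq> P" using contains_F[OF F min_primeD[OF P]] by blast
  then have "P' = P" using min_primeD2[OF P] F(2) by blast
  then show "P \<in> F" using P' by simp
qed

lemma min_primes_finite: "finite (min_primes R)"
  using F0_ex min_primes_sub_F by (meson finite_subset)

lemma min_primes_nil:
  assumes y: "y \<in> carrier R" and yP: "\<forall>P\<in>min_primes R. y \<in> P"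
  shows "\<exists>n::nat. y [^] n = \<zero>"
proof -
  obtain F where F: "finite F" "\<forall>P\<in>F. primeideal P R"
      "\<forall>y\<in>carrier R. (\<forall>P\<in>F. y \<in> P) \<longrightarrow> (\<exists>n::nat. y [^] n = \<zero>)"
    using F0_ex by blast
  have "\<forall>P'\<in>F. y \<in> P'"
  proof
    fix P' assume "P' \<in> F"
    then obtain P where "P \<in> min_primes R" "P \<subseteq> P'" using prime_contains_min F(2) by blast
    then show "y \<in> P'" using yP by blast
  qed
  then show ?thesis using F(3) y by blast
qed

lemma min_primes_nonempty:
  assumes "\<one> \<noteq> \<zero>" shows "min_primes R \<noteq> {}"
proof
  assume "min_primes R = {}"
  then obtain n :: nat where "\<one> [^] n = \<zero>" using min_primes_nil[of \<one>] by auto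
  then show False using assms by simp
qed

lemma min_prime_sep:
  assumes P: "P \<in> min_primes R"
  shows "\<exists>b\<in>carrier R. b \<notin> P \<and> (\<forall>Q\<in>min_primes R - {P}. b \<in> Q)"
proof (rule ccontr)
  assume "\<not> ?thesis"
  then have h: "\<And>y. y \<in> carrier R \<Longrightarrow> (\<forall>Q\<in>min_primes R - {P}. y \<in> Q) \<Longrightarrow> y \<in> P" by blast
  have "\<exists>Q\<in>min_primes R - {P}. Q \<subseteq> P"
  proof (rule avoid[OF min_primeD[OF P]])
    show "finite (min_primes R - {P})" using min_primes_finite by simp
    show "\<And>Q. Q \<in> min_primes R - {P} \<Longrightarrow> ideal Q R" using min_primeD prime_ideal by blast
  qed (use h in blast)
  then obtain Q where "Q \<in> min_primes R" "Q \<noteq> P" "Q \<subseteq> P" by blast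
  then show False using min_primeD2[OF P min_primeD] by blast
qed

end


definition deg :: "'i mon \<Rightarrow> nat" where
  "deg \<gamma> = (\<Sum>k\<in>Poly_Mapping.keys \<gamma>. Poly_Mapping.lookup \<gamma> k)"

lemma deg_on: "finite K \<Longrightarrow> Poly_Mapping.keys \<gamma> \<subseteq> K \<Longrightarrow> deg \<gamma> = (\<Sum>k\<in>K. Poly_Mapping.lookup \<gamma> k)"
  unfolding deg_def by (rule sum.mono_neutral_left) (auto simp: in_keys_iff)

lemma deg_add: "deg (\<gamma> + \<delta>) = deg \<gamma> + deg \<delta>"
proof -
  let ?K = "Poly_Mapping.keys \<gamma> \<union> Poly_Mapping.keys \<delta>"
  have f: "finite ?K" by simp
  have "Poly_Mapping.keys (\<gamma> + \<delta>) \<subseteq> ?K" by (rule keys_add)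
  then have "deg (\<gamma> + \<delta>) = (\<Sum>k\<in>?K. Poly_Mapping.lookup (\<gamma> + \<delta>) k)" by (rule deg_on[OF f])
  also have "\<dots> = (\<Sum>k\<in>?K. Poly_Mapping.lookup \<gamma> k + Poly_Mapping.lookup \<delta> k)"
    by (rule sum.cong) (simp_all add: lookup_add)
  also have "\<dots> = (\<Sum>k\<in>?K. Poly_Mapping.lookup \<gamma> k) + (\<Sum>k\<in>?K. Poly_Mapping.lookup \<delta> k)"
    by (rule sum.distrib)
  also have "(\<Sum>k\<in>?K. Poly_Mapping.lookup \<gamma> k) = deg \<gamma>" by (rule deg_on[symmetric, OF f]) blast
  also have "(\<Sum>k\<in>?K. Poly_Mapping.lookup \<delta> k) = deg \<delta>" by (rule deg_on[symmetric, OF f]) blast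
  finally show ?thesis .
qed

lemma lookup_le_deg: "Poly_Mapping.lookup \<gamma> k \<le> deg \<gamma>"
proof (cases "k \<in> Poly_Mapping.keys \<gamma>")
  case True
  then show ?thesis unfolding deg_def by (rule member_le_sum) auto
next
  case False
  then show ?thesis by (simp add: in_keys_iff)
qed

definition phi :: "(nat \<Rightarrow> 'i) \<Rightarrow> nat \<Rightarrow> 'i mon \<Rightarrow> (nat \<Rightarrow>\<^sub>0 nat)" where
  "phi e n \<gamma> = Abs_poly_mapping (\<lambda>j. if j < n then Poly_Mapping.lookup \<gamma> (e j) else 0)"

lemma lookup_phi: "Poly_Mapping.lookup (phi e n \<gamma>) j = (if j < n then Poly_Mapping.lookup \<gamma> (e j) else 0)"
proof -
  have "finite {j. (if j < n then Poly_Mapping.lookup \<gamma> (e j) else 0) \<noteq> 0}"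
    by (rule finite_subset[of _ "{..<n}"]) auto
  then show ?thesis unfolding phi_def by simp
qed

lemma phi_add: "phi e n (\<gamma> + \<delta>) = phi e n \<gamma> + phi e n \<delta>"
  by (rule poly_mapping_eqI) (simp add: lookup_phi lookup_add)

lemma phi_inj:
  assumes e: "bij_betw e {0..<n} K"
    and g: "Poly_Mapping.keys \<gamma> \<subseteq> K" and d: "Poly_Mapping.keys \<delta> \<subseteq> K"
    and eq: "phi e n \<gamma> = phi e n \<delta>"
  shows "\<gamma> = \<delta>"
proof (rule poly_mapping_eqI)
  fix k
  show "Poly_Mapping.lookup \<gamma> k = Poly_Mapping.lookup \<delta> k"
  proof (cases "k \<in> K")
    case True
    then obtain j where j: "j < n" "k = e j" using e by (auto simp: bij_betw_def)
    have "Poly_Mapping.lookup (phi e n \<gamma>) j = Poly_Mapping.lookup (phi e n \<delta>) j" using eq by simp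
    then show ?thesis using j by (simp add: lookup_phi)
  next
    case False
    then have "k \<notin> Poly_Mapping.keys \<gamma>" "k \<notin> Poly_Mapping.keys \<delta>" using g d by auto
    then show ?thesis by (simp add: in_keys_iff)
  qed
qed

lemma finite_keys_deg:
  assumes K: "finite K"
  shows "finite {\<gamma> :: 'i mon. Poly_Mapping.keys \<gamma> \<subseteq> K \<and> deg \<gamma> = d}"
proof -
  define N :: "'i mon" where "N = (\<Sum>k\<in>K. Poly_Mapping.single k d)"
  have lN: "Poly_Mapping.lookup N k = (if k \<in> K then d else 0)" for k
  proof -
    have "Poly_Mapping.lookup N k = (\<Sum>k'\<in>K. Poly_Mapping.lookup (Poly_Mapping.single k' d) k)"
      by (simp add: N_def lookup_sum)
    also have "\<dots> = (\<Sum>k'\<in>K. if k' = k then d else 0)"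
      by (rule sum.cong) (auto simp: lookup_single)
    also have "\<dots> = (if k \<in> K then d else 0)" using K by simp
    finally show ?thesis .
  qed
  have "{\<gamma> :: 'i mon. Poly_Mapping.keys \<gamma> \<subseteq> K \<and> deg \<gamma> = d} \<subseteq>
        {\<beta>. \<forall>k. Poly_Mapping.lookup \<beta> k \<le> Poly_Mapping.lookup N k}"
  proof (rule subsetI, rule CollectI, rule allI)
    fix \<gamma> k assume "\<gamma> \<in> {\<gamma> :: 'i mon. Poly_Mapping.keys \<gamma> \<subseteq> K \<and> deg \<gamma> = d}"
    then have g: "Poly_Mapping.keys \<gamma> \<subseteq> K" "deg \<gamma> = d" by auto
    show "Poly_Mapping.lookup \<gamma> k \<le> Poly_Mapping.lookup N k"
    proof (cases "k \<in> K")
      case True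
      then show ?thesis using lookup_le_deg[of \<gamma> k] g lN by simp
    next
      case False
      then have "k \<notin> Poly_Mapping.keys \<gamma>" using g by auto
      then show ?thesis by (simp add: in_keys_iff)
    qed
  qed
  then show ?thesis using finite_below[of N] by (rule finite_subset)
qed



context thm10
begin

definition Pinf :: "'a set \<Rightarrow> 'a set" where
  "Pinf P = {a \<in> carrier R. \<forall>\<alpha>\<in>BW_basis I. act \<alpha> 1 a \<in> P}"

lemma ideal_carr: "ideal P R \<Longrightarrow> x \<in> P \<Longrightarrow> x \<in> carrier R"
  by (meson ideal.Icarr)

lemma ideal_zero: "ideal P R \<Longrightarrow> \<zero> \<in> P"
  by (simp add: additive_subgroup.zero_closed ideal.axioms(1))

lemma ideal_add: "ideal P R \<Longrightarrow> x \<in> P \<Longrightarrow> y \<in> P \<Longrightarrow> x \<oplus> y \<in> P"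
  by (simp add: additive_subgroup.a_closed ideal.axioms(1))

lemma ideal_neg: "ideal P R \<Longrightarrow> x \<in> P \<Longrightarrow> \<ominus> x \<in> P"
  by (simp add: additive_subgroup.a_inv_closed ideal.axioms(1))

lemma ideal_minus: "ideal P R \<Longrightarrow> x \<in> P \<Longrightarrow> y \<in> P \<Longrightarrow> x \<ominus> y \<in> P"
  by (simp add: a_minus_def ideal_add ideal_neg)

lemma ideal_lmult: "ideal P R \<Longrightarrow> x \<in> carrier R \<Longrightarrow> y \<in> P \<Longrightarrow> x \<otimes> y \<in> P"
  by (simp add: ideal.I_l_closed)

lemma ideal_rmult: "ideal P R \<Longrightarrow> x \<in> P \<Longrightarrow> y \<in> carrier R \<Longrightarrow> x \<otimes> y \<in> P"
  by (simp add: ideal.I_r_closed)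

lemma Pinf_ideal:
  assumes P: "ideal P R"
  shows "ideal (Pinf P) R"
proof (rule idealI)
  show "ring R" by (rule ring_axioms)
  show "subgroup (Pinf P) (add_monoid R)"
  proof (rule add.subgroupI)
    show "Pinf P \<subseteq> carrier R" by (auto simp: Pinf_def)
    have "\<zero> \<in> Pinf P" using act_zero ideal_zero[OF P] by (simp add: Pinf_def)
    then show "Pinf P \<noteq> {}" by blast
    fix a b assume a: "a \<in> Pinf P" and b: "b \<in> Pinf P"
    then have ac: "a \<in> carrier R" "b \<in> carrier R" by (auto simp: Pinf_def)
    show "\<ominus> a \<in> Pinf P"
      using a ac act_neg ideal_neg[OF P] by (simp add: Pinf_def)
    show "a \<oplus> b \<in> Pinf P"
      using a b ac act_add ideal_add[OF P] by (simp add: Pinf_def)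
  qed
  fix a x assume a: "a \<in> Pinf P" and x: "x \<in> carrier R"
  have ac: "a \<in> carrier R" using a by (simp add: Pinf_def)
  have "\<forall>\<alpha>\<in>BW_basis I. act \<alpha> 1 (x \<otimes> a) \<in> P"
  proof
    fix \<alpha> assume \<alpha>: "\<alpha> \<in> BW_basis I"
    show "act \<alpha> 1 (x \<otimes> a) \<in> P"
    proof (rule leib_ideal[OF P \<alpha> x ac])
      fix \<beta> \<gamma> assume bg: "(\<beta>, \<gamma>) \<in> splits \<alpha>"
      then have "\<beta> \<in> BW_basis I" "\<gamma> \<in> BW_basis I" using BW_splits[OF \<alpha>] by auto
      then show "act \<beta> 1 x \<otimes> act \<gamma> 1 a \<in> P"
        using a x act_closed ideal_lmult[OF P] by (simp add: Pinf_def)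
    qed
  qed
  then show "x \<otimes> a \<in> Pinf P" using x ac by (simp add: Pinf_def)
  then show "a \<otimes> x \<in> Pinf P" using x ac by (simp add: m_comm)
qed

lemma Pinf_sub: "Pinf P \<subseteq> P"
proof
  fix x assume "x \<in> Pinf P"
  then have "x \<in> carrier R" "act 0 1 x \<in> P" by (auto simp: Pinf_def)
  then show "x \<in> P" using act01 by simp
qed

end


context thm10
begin

lemma minus_add_cancel: "x \<in> carrier R \<Longrightarrow> y \<in> carrier R \<Longrightarrow> x = (x \<oplus> y) \<ominus> y"
  by (simp add: a_minus_def a_assoc r_neg)

lemma Pinf_prime:
  assumes P: "primeideal P R"
  shows "primeideal (Pinf P) R"
proof (rule primeidealI)
  have Pi: "ideal P R" using P by (rule prime_ideal)
  show "ideal (Pinf P) R" using Pinf_ideal[OF Pi] .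
  show "cring R" by (rule is_cring)
  show "carrier R \<noteq> Pinf P"
  proof
    assume "carrier R = Pinf P"
    then have "\<one> \<in> P" using Pinf_sub by blast
    then have "P = carrier R" using Pi by (simp add: ideal.one_imp_carrier)
    then show False using primeideal.I_notcarr[OF P] by simp
  qed
  fix a b assume a: "a \<in> carrier R" and b: "b \<in> carrier R" and ab: "a \<otimes> b \<in> Pinf P"
  show "a \<in> Pinf P \<or> b \<in> Pinf P"
  proof (rule ccontr)
    assume "\<not> (a \<in> Pinf P \<or> b \<in> Pinf P)"
    then have na: "a \<notin> Pinf P" and nb: "b \<notin> Pinf P" by auto
    define Sa where "Sa = {\<alpha> \<in> BW_basis I. act \<alpha> 1 a \<notin> P}"
    define Sb where "Sb = {\<alpha> \<in> BW_basis I. act \<alpha> 1 b \<notin> P}"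
    have "Sa \<noteq> {}" using na a by (auto simp: Sa_def Pinf_def)
    have "Sb \<noteq> {}" using nb b by (auto simp: Sb_def Pinf_def)
    define da where "da = (LEAST d. \<exists>\<alpha>\<in>Sa. deg \<alpha> = d)"
    define db where "db = (LEAST d. \<exists>\<alpha>\<in>Sb. deg \<alpha> = d)"
    have exa: "\<exists>d. \<exists>\<alpha>\<in>Sa. deg \<alpha> = d" using \<open>Sa \<noteq> {}\<close> by blast
    have exb: "\<exists>d. \<exists>\<alpha>\<in>Sb. deg \<alpha> = d" using \<open>Sb \<noteq> {}\<close> by blast
    obtain \<alpha>0 where \<alpha>0: "\<alpha>0 \<in> Sa" "deg \<alpha>0 = da"
      using LeastI_ex[OF exa] unfolding da_def by blast
    obtain \<beta>0 where \<beta>0: "\<beta>0 \<in> Sb" "deg \<beta>0 = db"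
      using LeastI_ex[OF exb] unfolding db_def by blast
    have da_le: "da \<le> deg \<gamma>" if "\<gamma> \<in> Sa" for \<gamma>
      unfolding da_def by (rule Least_le) (use that in blast)
    have db_le: "db \<le> deg \<gamma>" if "\<gamma> \<in> Sb" for \<gamma>
      unfolding db_def by (rule Least_le) (use that in blast)
    define K where "K = Poly_Mapping.keys \<alpha>0 \<union> Poly_Mapping.keys \<beta>0"
    have Kf: "finite K" by (simp add: K_def)
    obtain e where e: "bij_betw e {0..<card K} K" using ex_bij_betw_nat_finite[OF Kf] by blast
    define n where "n = card K"
    define Ca where "Ca = {\<gamma> \<in> Sa. Poly_Mapping.keys \<gamma> \<subseteq> K \<and> deg \<gamma> = da}"
    define Cb where "Cb = {\<gamma> \<in> Sb. Poly_Mapping.keys \<gamma> \<subseteq> K \<and> deg \<gamma> = db}"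
    have Caf: "finite Ca"
      by (rule finite_subset[OF _ finite_keys_deg[OF Kf, of da]]) (auto simp: Ca_def)
    have Cbf: "finite Cb"
      by (rule finite_subset[OF _ finite_keys_deg[OF Kf, of db]]) (auto simp: Cb_def)
    have "\<alpha>0 \<in> Ca" using \<alpha>0 by (auto simp: Ca_def K_def)
    then have "Ca \<noteq> {}" by blast
    have "\<beta>0 \<in> Cb" using \<beta>0 by (auto simp: Cb_def K_def)
    then have "Cb \<noteq> {}" by blast
    obtain \<alpha> where \<alpha>: "is_arg_min (phi e n) (\<lambda>x. x \<in> Ca) \<alpha>"
      using ex_is_arg_min_if_finite[OF Caf \<open>Ca \<noteq> {}\<close>] by blast
    obtain \<beta> where \<beta>: "is_arg_min (phi e n) (\<lambda>x. x \<in> Cb) \<beta>"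
      using ex_is_arg_min_if_finite[OF Cbf \<open>Cb \<noteq> {}\<close>] by blast
    have \<alpha>C: "\<alpha> \<in> Ca" and \<alpha>min: "\<And>\<gamma>. \<gamma> \<in> Ca \<Longrightarrow> phi e n \<alpha> \<le> phi e n \<gamma>"
      using \<alpha> by (auto simp: is_arg_min_linorder)
    have \<beta>C: "\<beta> \<in> Cb" and \<beta>min: "\<And>\<gamma>. \<gamma> \<in> Cb \<Longrightarrow> phi e n \<beta> \<le> phi e n \<gamma>"
      using \<beta> by (auto simp: is_arg_min_linorder)
    have \<alpha>S: "\<alpha> \<in> BW_basis I" "act \<alpha> 1 a \<notin> P" "Poly_Mapping.keys \<alpha> \<subseteq> K" "deg \<alpha> = da"
      using \<alpha>C by (auto simp: Ca_def Sa_def)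
    have \<beta>S: "\<beta> \<in> BW_basis I" "act \<beta> 1 b \<notin> P" "Poly_Mapping.keys \<beta> \<subseteq> K" "deg \<beta> = db"
      using \<beta>C by (auto simp: Cb_def Sb_def)
    have ab_bw: "\<alpha> + \<beta> \<in> BW_basis I" using BW_plus[OF \<alpha>S(1) \<beta>S(1)] .
    define f where "f = (\<lambda>(\<gamma>, \<delta>). act \<gamma> 1 a \<otimes> act \<delta> 1 b)"
    define A where "A = splits (\<alpha> + \<beta>)"
    have Af: "finite A" by (simp add: A_def finite_splits)
    have fc: "f p \<in> carrier R" if "p \<in> A" for p
    proof -
      obtain \<gamma> \<delta> where p: "p = (\<gamma>, \<delta>)" by fastforce
      then have "\<gamma> \<in> BW_basis I" "\<delta> \<in> BW_basis I" using BW_splits[OF ab_bw] that by (auto simp: A_def)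
      then show ?thesis using p a b act_closed by (simp add: f_def)
    qed
    have key: "f p \<in> P" if p: "p \<in> A" "p \<noteq> (\<alpha>, \<beta>)" for p
    proof -
      obtain \<gamma> \<delta> where pp: "p = (\<gamma>, \<delta>)" by fastforce
      have gd: "\<gamma> + \<delta> = \<alpha> + \<beta>" using p pp by (simp add: A_def splits_def)
      have bw: "\<gamma> \<in> BW_basis I" "\<delta> \<in> BW_basis I" using BW_split gd ab_bw by metis+
      show ?thesis
      proof (cases "act \<gamma> 1 a \<in> P")
        case True
        then show ?thesis using pp ideal_rmult[OF prime_ideal[OF P]] act_closed[OF bw(2) b]
          by (simp add: f_def)
      next
        case ga: False
        show ?thesis
        proof (cases "act \<delta> 1 b \<in> P")
          case True
          then show ?thesis using pp ideal_lmult[OF prime_ideal[OF P]] act_closed[OF bw(1) a]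
            by (simp add: f_def)
        next
          case gb: False
          have gSa: "\<gamma> \<in> Sa" using ga bw by (simp add: Sa_def)
          have dSb: "\<delta> \<in> Sb" using gb bw by (simp add: Sb_def)
          have "deg \<gamma> + deg \<delta> = da + db" using gd deg_add[of \<gamma> \<delta>] deg_add[of \<alpha> \<beta>] \<alpha>S(4) \<beta>S(4) by simp
          moreover have "da \<le> deg \<gamma>" "db \<le> deg \<delta>" using da_le[OF gSa] db_le[OF dSb] .
          ultimately have dg: "deg \<gamma> = da" "deg \<delta> = db" by linarith+
          have kab: "Poly_Mapping.keys (\<alpha> + \<beta>) \<subseteq> K" using keys_add[of \<alpha> \<beta>] \<alpha>S(3) \<beta>S(3) by blast
          have "Poly_Mapping.keys \<gamma> \<subseteq> K" using keys_le_add[of \<gamma> \<delta>] gd kab by simp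
          moreover have "Poly_Mapping.keys \<delta> \<subseteq> K"
          proof -
            have "\<delta> + \<gamma> = \<alpha> + \<beta>" using gd by (simp add: add.commute)
            then show ?thesis using keys_le_add[of \<delta> \<gamma>] kab by simp
          qed
          ultimately have gC: "\<gamma> \<in> Ca" and dC: "\<delta> \<in> Cb" using gSa dSb dg
            by (auto simp: Ca_def Cb_def)
          have le1: "phi e n \<alpha> \<le> phi e n \<gamma>" using \<alpha>min[OF gC] .
          have le2: "phi e n \<beta> \<le> phi e n \<delta>" using \<beta>min[OF dC] .
          have sum: "phi e n \<gamma> + phi e n \<delta> = phi e n \<alpha> + phi e n \<beta>"
            using gd phi_add by metis
          have "phi e n \<alpha> = phi e n \<gamma>"
          proof (rule ccontr)
            assume "phi e n \<alpha> \<noteq> phi e n \<gamma>"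
            then have "phi e n \<alpha> < phi e n \<gamma>" using le1 by simp
            then have "phi e n \<alpha> + phi e n \<beta> < phi e n \<gamma> + phi e n \<delta>"
              using le2 by (rule add_less_le_mono)
            then show False using sum by simp
          qed
          then have "\<alpha> = \<gamma>" using phi_inj[OF e[folded n_def] \<alpha>S(3) \<open>Poly_Mapping.keys \<gamma> \<subseteq> K\<close>] by simp
          moreover then have "\<delta> = \<beta>" using gd by simp
          ultimately show ?thesis using p(2) pp by simp
        qed
      qed
    qed
    have pA: "(\<alpha>, \<beta>) \<in> A" by (simp add: A_def splits_def)
    have Aeq: "A = insert (\<alpha>, \<beta>) (A - {(\<alpha>, \<beta>)})" using pA by blast
    have "finsum R f A = f (\<alpha>, \<beta>) \<oplus> finsum R f (A - {(\<alpha>, \<beta>)})"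
      by (subst Aeq, rule finsum_insert) (use Af fc pA in auto)
    moreover have rest: "finsum R f (A - {(\<alpha>, \<beta>)}) \<in> P"
      by (rule finsum_ideal[OF prime_ideal[OF P]]) (use Af key in auto)
    moreover have "finsum R f A \<in> P"
    proof -
      have "act (\<alpha> + \<beta>) 1 (a \<otimes> b) \<in> P" using ab ab_bw by (simp add: Pinf_def)
      then show ?thesis using leib[OF ab_bw a b, of 1] by (simp add: f_def A_def)
    qed
    ultimately have "f (\<alpha>, \<beta>) \<in> P"
      using minus_add_cancel[of "f (\<alpha>, \<beta>)" "finsum R f (A - {(\<alpha>, \<beta>)})"] fc[OF pA]
        ideal_minus[OF prime_ideal[OF P]] ideal_carr[OF prime_ideal[OF P]] by metis
    then have "act \<alpha> 1 a \<otimes> act \<beta> 1 b \<in> P" by (simp add: f_def)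
    then have "act \<alpha> 1 a \<in> P \<or> act \<beta> 1 b \<in> P"
      using primeideal.I_prime[OF P] act_closed[OF \<alpha>S(1) a] act_closed[OF \<beta>S(1) b] by blast
    then show False using \<alpha>S(2) \<beta>S(2) by blast
  qed
qed

lemma minprime_stable:
  assumes P: "P \<in> min_primes R" and \<alpha>: "\<alpha> \<in> BW_basis I" and x: "x \<in> P"
  shows "act \<alpha> 1 x \<in> P"
proof -
  have "Pinf P = P" using min_primeD2[OF P Pinf_prime[OF min_primeD[OF P]] Pinf_sub] .
  then show ?thesis using x \<alpha> by (auto simp: Pinf_def)
qed

end


context thm10
begin

abbreviation gp :: "'g \<Rightarrow> 'a set \<Rightarrow> 'a set" where
  "gp g P \<equiv> gpre R act g P"

lemma act0_rhr: "ring_hom_ring R R (act 0 g)"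
  by (rule ring_hom_ringI2[OF ring_axioms ring_axioms act0_hom])

lemma act0_pow: "x \<in> carrier R \<Longrightarrow> act 0 g (x [^] (n::nat)) = (act 0 g x) [^] n"
  using ring_hom_ring.hom_nat_pow[OF act0_rhr] by blast

lemma act0_one: "act 0 g \<one> = \<one>"
  using act_one by simp

lemma act0_zero: "act 0 g \<zero> = \<zero>"
  using act_zero by simp

lemma gpre_ideal: "ideal P R \<Longrightarrow> ideal (gp g P) R"
  unfolding gpre_def using ring_hom_ring.ideal_vimage[OF act0_rhr] by blast

lemma gpre_prime:
  assumes P: "primeideal P R" shows "primeideal (gp g P) R"
proof (rule primeidealI)
  show "ideal (gp g P) R" by (rule gpre_ideal[OF prime_ideal[OF P]])
  show "cring R" by (rule is_cring)
  show "carrier R \<noteq> gp g P"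
  proof
    assume "carrier R = gp g P"
    then have "act 0 g \<one> \<in> P" by (auto simp: gpre_def)
    then have "\<one> \<in> P" by (simp add: act0_one)
    then have "P = carrier R" using prime_ideal[OF P] by (simp add: ideal.one_imp_carrier)
    then show False using primeideal.I_notcarr[OF P] by simp
  qed
  fix a b assume a: "a \<in> carrier R" and b: "b \<in> carrier R" and ab: "a \<otimes> b \<in> gp g P"
  then have "act 0 g a \<otimes> act 0 g b \<in> P" by (simp add: gpre_def act0_mult)
  then have "act 0 g a \<in> P \<or> act 0 g b \<in> P"
    using primeideal.I_prime[OF P] act_closed a b by simp
  then show "a \<in> gp g P \<or> b \<in> gp g P" using a b by (auto simp: gpre_def)
qed

lemma gpre_comp: "gp (g * h) P = gp h (gp g P)"
  by (auto simp: gpre_def act0_comp act_closed)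

lemma gpre_one: "gp 1 P = P \<inter> carrier R"
  by (auto simp: gpre_def act01)

lemma gpre_cover:
  assumes Q: "Q \<in> min_primes R"
  shows "\<exists>P'\<in>min_primes R. gp g P' = Q"
proof -
  let ?F = "(\<lambda>P'. gp g P') ` min_primes R"
  have "\<exists>P''\<in>?F. P'' \<subseteq> Q"
  proof (rule avoid[OF min_primeD[OF Q]])
    show "finite ?F" using min_primes_finite by (rule finite_imageI)
    fix P assume "P \<in> ?F"
    then obtain P' where "P' \<in> min_primes R" "P = gp g P'" by blast
    then show "ideal P R" using gpre_ideal[OF prime_ideal[OF min_primeD]] by blast
  next
    fix y assume y: "y \<in> carrier R" and yP: "\<forall>P\<in>?F. y \<in> P"
    have gy: "act 0 g y \<in> carrier R" using act_closed[OF BW0 y] .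
    have "\<forall>P\<in>min_primes R. act 0 g y \<in> P"
    proof
      fix P assume "P \<in> min_primes R"
      then have "y \<in> gp g P" using yP by blast
      then show "act 0 g y \<in> P" unfolding gpre_def by blast
    qed
    then obtain n :: nat where n: "act 0 g y [^] n = \<zero>" using min_primes_nil[OF gy] by blast
    have yn: "y [^] n \<in> carrier R" using y by simp
    have "act 0 g (y [^] n) = act 0 g \<zero>" using act0_pow[OF y] n act0_zero by simp
    then have "y [^] n = \<zero>" using inj[of g] yn zero_closed unfolding inj_on_def by blast
    then show "y \<in> Q" using nilp_in_prime[OF min_primeD[OF Q] y] by blast
  qed
  then obtain P' where P': "P' \<in> min_primes R" "gp g P' \<subseteq> Q" by blast
  then have "gp g P' = Q" using min_primeD2[OF Q gpre_prime[OF min_primeD[OF P'(1)]]] by blast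
  then show ?thesis using P' by blast
qed

lemma gpre_min:
  assumes P: "P \<in> min_primes R" shows "gp g P \<in> min_primes R"
proof -
  define A where "A = {P\<in>min_primes R. gp g P \<in> min_primes R}"
  have fin: "finite (min_primes R)" by (rule min_primes_finite)
  have AO: "A \<subseteq> min_primes R" unfolding A_def by blast
  have finA: "finite A" using fin AO by (rule finite_subset[rotated])
  have sub: "min_primes R \<subseteq> (\<lambda>P. gp g P) ` A"
  proof
    fix Q assume Q: "Q \<in> min_primes R"
    then obtain P' where P': "P' \<in> min_primes R" "gp g P' = Q" using gpre_cover by blast
    then have "P' \<in> A" using Q unfolding A_def by blast
    then show "Q \<in> (\<lambda>P. gp g P) ` A" using P'(2) by blast
  qed
  have "card (min_primes R) \<le> card ((\<lambda>P. gp g P) ` A)"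
    using sub finite_imageI[OF finA] by (rule card_mono[rotated])
  also have "\<dots> \<le> card A" using finA by (rule card_image_le)
  finally have c1: "card (min_primes R) \<le> card A" .
  have c2: "card A \<le> card (min_primes R)" using fin AO by (rule card_mono)
  have "A = min_primes R" using card_subset_eq[OF fin AO] c1 c2 by simp
  then show ?thesis using P unfolding A_def by blast
qed

lemma gpre_inj: "inj_on (gp g) (min_primes R)"
proof (rule finite_surj_inj[OF min_primes_finite])
  show "min_primes R \<subseteq> gp g ` min_primes R"
  proof
    fix Q assume "Q \<in> min_primes R"
    then obtain P' where "P' \<in> min_primes R" "gp g P' = Q" using gpre_cover by blast
    then show "Q \<in> gp g ` min_primes R" by blast
  qed
qed

lemma stab_parts:
  assumes J: "ideal J R"
    and g: "\<And>a h. a \<in> J \<Longrightarrow> act 0 h a \<in> J"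
    and d: "\<And>a \<alpha>. a \<in> J \<Longrightarrow> \<alpha> \<in> BW_basis I \<Longrightarrow> act \<alpha> 1 a \<in> J"
  shows "stable_under I act UNIV J"
  unfolding stable_under_def
proof (intro ballI)
  fix \<alpha> h a assume \<alpha>: "\<alpha> \<in> BW_basis I" and a: "a \<in> J"
  have "act \<alpha> h a = act \<alpha> 1 (act 0 h a)" using act_split[OF \<alpha>] ideal_carr[OF J a] by simp
  then show "act \<alpha> h a \<in> J" using g d a \<alpha> by simp
qed

lemma simple_cases: "ideal J R \<Longrightarrow> stable_under I act UNIV J \<Longrightarrow> J = {\<zero>} \<or> J = carrier R"
  using simple by (simp add: D_simple_def)

lemma Inter_min_zero:
  assumes one: "\<one> \<noteq> \<zero>"
  shows "\<Inter>(min_primes R) = {\<zero>}"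
proof -
  have ne: "min_primes R \<noteq> {}" by (rule min_primes_nonempty[OF one])
  have J: "ideal (\<Inter>(min_primes R)) R"
    by (rule i_Intersect) (use ne min_primeD prime_ideal in auto)
  have "stable_under I act UNIV (\<Inter>(min_primes R))"
  proof (rule stab_parts[OF J])
    fix a h assume a: "a \<in> \<Inter>(min_primes R)"
    show "act 0 h a \<in> \<Inter>(min_primes R)"
    proof
      fix Q assume Q: "Q \<in> min_primes R"
      have "a \<in> gp h Q" using a gpre_min[OF Q] by blast
      then show "act 0 h a \<in> Q" by (simp add: gpre_def)
    qed
  next
    fix a \<alpha> assume a: "a \<in> \<Inter>(min_primes R)" and \<alpha>: "\<alpha> \<in> BW_basis I"
    show "act \<alpha> 1 a \<in> \<Inter>(min_primes R)" using a minprime_stable[OF _ \<alpha>] by blast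
  qed
  then have "\<Inter>(min_primes R) = {\<zero>} \<or> \<Inter>(min_primes R) = carrier R" using simple_cases[OF J] by blast
  moreover have "\<one> \<notin> \<Inter>(min_primes R)"
  proof
    assume "\<one> \<in> \<Inter>(min_primes R)"
    then obtain P where P: "P \<in> min_primes R" "\<one> \<in> P" using ne by blast
    then have "P = carrier R" using min_primeD prime_ideal ideal.one_imp_carrier by blast
    then show False using primeideal.I_notcarr[OF min_primeD[OF P(1)]] by simp
  qed
  ultimately show ?thesis by blast
qed

lemma transitive:
  assumes P: "P \<in> min_primes R" and Q: "Q \<in> min_primes R"
  shows "\<exists>g. gp g P = Q"
proof -
  define J where "J = \<Inter>(range (\<lambda>g. gp g P))"
  have J: "ideal J R" unfolding J_def
    by (rule i_Intersect) (use gpre_ideal prime_ideal[OF min_primeD[OF P]] in auto)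
  have Jc: "J \<subseteq> carrier R" using J ideal_carr by blast
  have "stable_under I act UNIV J"
  proof (rule stab_parts[OF J])
    fix a h assume a: "a \<in> J"
    then have ac: "a \<in> carrier R" using Jc by blast
    show "act 0 h a \<in> J" unfolding J_def
    proof (rule InterI)
      fix W assume "W \<in> range (\<lambda>g. gp g P)"
      then obtain g where W: "W = gp g P" by blast
      have "a \<in> gp (g * h) P" using a by (auto simp: J_def)
      then have "act 0 (g * h) a \<in> P" by (simp add: gpre_def)
      then have "act 0 g (act 0 h a) \<in> P" using act0_comp[OF ac] by simp
      then show "act 0 h a \<in> W" using W act_closed[OF BW0 ac] by (simp add: gpre_def)
    qed
  next
    fix a \<alpha> assume a: "a \<in> J" and \<alpha>: "\<alpha> \<in> BW_basis I"
    show "act \<alpha> 1 a \<in> J" unfolding J_def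
    proof (rule InterI)
      fix W assume "W \<in> range (\<lambda>g. gp g P)"
      then obtain g where W: "W = gp g P" by blast
      have "a \<in> W" using a W by (auto simp: J_def)
      then show "act \<alpha> 1 a \<in> W" using minprime_stable[OF gpre_min[OF P] \<alpha>] W by blast
    qed
  qed
  then have "J = {\<zero>} \<or> J = carrier R" using simple_cases[OF J] by blast
  moreover have "\<one> \<notin> J"
  proof
    assume "\<one> \<in> J"
    then have "\<one> \<in> gp 1 P" by (auto simp: J_def)
    then have "\<one> \<in> P" by (simp add: gpre_one)
    then have "P = carrier R" using min_primeD[OF P] prime_ideal ideal.one_imp_carrier by blast
    then show False using primeideal.I_notcarr[OF min_primeD[OF P]] by simp
  qed
  ultimately have J0: "J = {\<zero>}" by blast
  have "\<exists>W\<in>(\<lambda>g. gp g P) ` (UNIV :: 'g set). W \<subseteq> Q"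
  proof (rule avoid[OF min_primeD[OF Q]])
    have "(\<lambda>g. gp g P) ` (UNIV :: 'g set) \<subseteq> min_primes R" using gpre_min[OF P] by blast
    then show "finite ((\<lambda>g. gp g P) ` (UNIV :: 'g set))" using min_primes_finite finite_subset by blast
    show "\<And>W. W \<in> (\<lambda>g. gp g P) ` (UNIV :: 'g set) \<Longrightarrow> ideal W R"
      using gpre_ideal prime_ideal[OF min_primeD[OF P]] by blast
    fix y assume "y \<in> carrier R" "\<forall>W\<in>(\<lambda>g. gp g P) ` (UNIV :: 'g set). y \<in> W"
    then have "y \<in> J" by (auto simp: J_def)
    then have "y = \<zero>" using J0 by blast
    then show "y \<in> Q" using ideal_zero[OF prime_ideal[OF min_primeD[OF Q]]] by simp
  qed
  then obtain g where "gp g P \<subseteq> Q" by blast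
  then have "gp g P = Q" using min_primeD2[OF Q gpre_prime[OF min_primeD[OF P]]] by blast
  then show ?thesis by blast
qed

end


context thm10
begin

lemma coset_eq:
  assumes P: "ideal P R" and x: "x \<in> carrier R" and y: "y \<in> carrier R"
  shows "P +> x = P +> y \<longleftrightarrow> x \<ominus> y \<in> P"
proof
  assume e: "P +> x = P +> y"
  have "x \<in> P +> x" using abelian_subgroup.a_rcos_self[OF ideal.axioms(1)[OF P, THEN abelian_subgroupI3] x]
    by (metis P abelian_subgroup.a_rcos_self ideal.axioms(1) abelian_subgroupI3 is_abelian_group x)
  then have "x \<in> P +> y" using e by simp
  then show "x \<ominus> y \<in> P"
    using abelian_subgroup.a_rcos_module_minus[OF abelian_subgroupI3[OF ideal.axioms(1)[OF P] is_abelian_group] ring_axioms y x]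
    by simp
next
  assume d: "x \<ominus> y \<in> P"
  have sg: "abelian_subgroup P R" using abelian_subgroupI3[OF ideal.axioms(1)[OF P] is_abelian_group] .
  have "x \<in> P +> y"
    using abelian_subgroup.a_rcos_module_minus[OF sg ring_axioms y x] d by simp
  then show "P +> x = P +> y"
    using a_repr_independence[of x P y] y additive_subgroup.a_subgroup[OF ideal.axioms(1)[OF P]] by simp
qed

definition IP :: "'a set \<Rightarrow> 'a set" where
  "IP P = {b \<in> carrier R. \<forall>Q\<in>min_primes R - {P}. b \<in> Q}"

definition Tset :: "'a set" where
  "Tset = {a \<in> carrier R. \<forall>P\<in>min_primes R. \<exists>b\<in>IP P. a \<ominus> b \<in> P}"

lemma mp_ideal: "P \<in> min_primes R \<Longrightarrow> ideal P R"
  using min_primeD prime_ideal by blast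

lemma IP_zero: "\<zero> \<in> IP P"
  unfolding IP_def using mp_ideal ideal_zero by blast

lemma Tset_ideal: "ideal Tset R"
proof (rule idealI)
  show "ring R" by (rule ring_axioms)
  show "subgroup Tset (add_monoid R)"
  proof (rule add.subgroupI)
    show "Tset \<subseteq> carrier R" by (auto simp: Tset_def)
    have "\<zero> \<in> Tset" unfolding Tset_def
    proof (intro CollectI conjI ballI)
      show "\<zero> \<in> carrier R" by simp
      fix P assume "P \<in> min_primes R"
      then have zP: "\<zero> \<in> P" using mp_ideal ideal_zero by blast
      have z: "\<zero> \<ominus> \<zero> = \<zero>" by algebra
      have "\<zero> \<ominus> \<zero> \<in> P" by (subst z) (rule zP)
      then show "\<exists>b\<in>IP P. \<zero> \<ominus> b \<in> P" using IP_zero by blast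
    qed
    then show "Tset \<noteq> {}" by blast
    fix a b assume a: "a \<in> Tset" and b: "b \<in> Tset"
    have ac: "a \<in> carrier R" "b \<in> carrier R" using a b by (auto simp: Tset_def)
    show "\<ominus> a \<in> Tset" unfolding Tset_def
    proof (intro CollectI conjI ballI)
      show "\<ominus> a \<in> carrier R" using ac by simp
      fix P assume P: "P \<in> min_primes R"
      then obtain c where c: "c \<in> IP P" "a \<ominus> c \<in> P" using a by (auto simp: Tset_def)
      have cc: "c \<in> carrier R" using c by (simp add: IP_def)
      have "\<ominus> c \<in> IP P" using c mp_ideal ideal_neg by (auto simp: IP_def)
      moreover have "\<ominus> a \<ominus> \<ominus> c = \<ominus> (a \<ominus> c)" using ac cc by algebra
      moreover have "\<ominus> (a \<ominus> c) \<in> P" using c ideal_neg[OF mp_ideal[OF P]] by blast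
      ultimately show "\<exists>b\<in>IP P. \<ominus> a \<ominus> b \<in> P" by metis
    qed
    show "a \<oplus> b \<in> Tset" unfolding Tset_def
    proof (intro CollectI conjI ballI)
      show "a \<oplus> b \<in> carrier R" using ac by simp
      fix P assume P: "P \<in> min_primes R"
      obtain c where c: "c \<in> IP P" "a \<ominus> c \<in> P" using a P by (auto simp: Tset_def)
      obtain d where d: "d \<in> IP P" "b \<ominus> d \<in> P" using b P by (auto simp: Tset_def)
      have cc: "c \<in> carrier R" "d \<in> carrier R" using c d by (auto simp: IP_def)
      have "c \<oplus> d \<in> IP P" using c d mp_ideal ideal_add by (auto simp: IP_def)
      moreover have "a \<oplus> b \<ominus> (c \<oplus> d) = (a \<ominus> c) \<oplus> (b \<ominus> d)" using ac cc by algebra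
      moreover have "(a \<ominus> c) \<oplus> (b \<ominus> d) \<in> P" using c d ideal_add[OF mp_ideal[OF P]] by blast
      ultimately show "\<exists>e\<in>IP P. a \<oplus> b \<ominus> e \<in> P" by metis
    qed
  qed
  fix a x assume a: "a \<in> Tset" and x: "x \<in> carrier R"
  have ac: "a \<in> carrier R" using a by (auto simp: Tset_def)
  show xa: "x \<otimes> a \<in> Tset" unfolding Tset_def
  proof (intro CollectI conjI ballI)
    show "x \<otimes> a \<in> carrier R" using ac x by simp
    fix P assume P: "P \<in> min_primes R"
    obtain c where c: "c \<in> IP P" "a \<ominus> c \<in> P" using a P by (auto simp: Tset_def)
    have cc: "c \<in> carrier R" using c by (auto simp: IP_def)
    have "x \<otimes> c \<in> IP P" using c x mp_ideal ideal_lmult by (auto simp: IP_def)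
    moreover have "x \<otimes> a \<ominus> x \<otimes> c = x \<otimes> (a \<ominus> c)" using ac cc x by algebra
    moreover have "x \<otimes> (a \<ominus> c) \<in> P" using c x ideal_lmult[OF mp_ideal[OF P]] by blast
    ultimately show "\<exists>e\<in>IP P. x \<otimes> a \<ominus> e \<in> P" by metis
  qed
  then show "a \<otimes> x \<in> Tset" using ac x by (simp add: m_comm)
qed

lemma Tset_stable: "stable_under I act UNIV Tset"
proof (rule stab_parts[OF Tset_ideal])
  fix a h assume a: "a \<in> Tset"
  have ac: "a \<in> carrier R" using a by (simp add: Tset_def)
  show "act 0 h a \<in> Tset" unfolding Tset_def
  proof (intro CollectI conjI ballI)
    show "act 0 h a \<in> carrier R" using act_closed[OF BW0 ac] .
    fix Q assume Q: "Q \<in> min_primes R"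
    have P': "gp h Q \<in> min_primes R" using gpre_min[OF Q] .
    obtain b where b: "b \<in> IP (gp h Q)" "a \<ominus> b \<in> gp h Q" using a P' by (auto simp: Tset_def)
    have bc: "b \<in> carrier R" using b by (simp add: IP_def)
    have "act 0 h b \<in> IP Q" unfolding IP_def
    proof (intro CollectI conjI ballI)
      show "act 0 h b \<in> carrier R" using act_closed[OF BW0 bc] .
      fix Q'' assume Q'': "Q'' \<in> min_primes R - {Q}"
      then have "gp h Q'' \<noteq> gp h Q" using gpre_inj[of h] Q unfolding inj_on_def by blast
      moreover have "gp h Q'' \<in> min_primes R" using gpre_min Q'' by blast
      ultimately have "b \<in> gp h Q''" using b(1) by (simp add: IP_def)
      then show "act 0 h b \<in> Q''" by (simp add: gpre_def)
    qed
    moreover have "act 0 h a \<ominus> act 0 h b \<in> Q"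
    proof -
      have "act 0 h (a \<ominus> b) \<in> Q" using b(2) by (simp add: gpre_def)
      then show ?thesis using act_minus[OF BW0 ac bc] by simp
    qed
    ultimately show "\<exists>b\<in>IP Q. act 0 h a \<ominus> b \<in> Q" by blast
  qed
next
  fix a \<alpha> assume a: "a \<in> Tset" and \<alpha>: "\<alpha> \<in> BW_basis I"
  have ac: "a \<in> carrier R" using a by (simp add: Tset_def)
  show "act \<alpha> 1 a \<in> Tset" unfolding Tset_def
  proof (intro CollectI conjI ballI)
    show "act \<alpha> 1 a \<in> carrier R" using act_closed[OF \<alpha> ac] .
    fix P assume P: "P \<in> min_primes R"
    obtain b where b: "b \<in> IP P" "a \<ominus> b \<in> P" using a P by (auto simp: Tset_def)
    have bc: "b \<in> carrier R" using b by (simp add: IP_def)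
    have "act \<alpha> 1 b \<in> IP P" using b act_closed[OF \<alpha> bc] minprime_stable[OF _ \<alpha>]
      by (auto simp: IP_def)
    moreover have "act \<alpha> 1 a \<ominus> act \<alpha> 1 b \<in> P"
      using minprime_stable[OF P \<alpha> b(2)] act_minus[OF \<alpha> ac bc] by simp
    ultimately show "\<exists>b\<in>IP P. act \<alpha> 1 a \<ominus> b \<in> P" by blast
  qed
qed

lemma Tset_all:
  assumes ne: "min_primes R \<noteq> {}"
  shows "Tset = carrier R"
proof -
  obtain P0 where P0: "P0 \<in> min_primes R" using ne by blast
  obtain b where b: "b \<in> carrier R" "b \<notin> P0" "\<forall>Q\<in>min_primes R - {P0}. b \<in> Q"
    using min_prime_sep[OF P0] by blast
  have bI: "b \<in> IP P0" using b by (simp add: IP_def)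
  have "b \<in> Tset" unfolding Tset_def
  proof (intro CollectI conjI ballI)
    show "b \<in> carrier R" by (rule b(1))
    fix P assume P: "P \<in> min_primes R"
    show "\<exists>c\<in>IP P. b \<ominus> c \<in> P"
    proof (cases "P = P0")
      case True
      have "b \<ominus> b = \<zero>" using b(1) by algebra
      then show ?thesis using True bI ideal_zero[OF mp_ideal[OF P]] by metis
    next
      case False
      have "b \<ominus> \<zero> = b" using b(1) by algebra
      then show ?thesis using False b(3) P IP_zero by (metis DiffI singletonD)
    qed
  qed
  moreover have "b \<noteq> \<zero>" using b(2) ideal_zero[OF mp_ideal[OF P0]] by blast
  ultimately have "Tset \<noteq> {\<zero>}" by blast
  then show ?thesis using simple_cases[OF Tset_ideal Tset_stable] by blast
qed

lemma e_exists:
  assumes P: "P \<in> min_primes R"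
  shows "\<exists>e\<in>carrier R. e \<ominus> \<one> \<in> P \<and> (\<forall>Q\<in>min_primes R - {P}. e \<in> Q)"
proof -
  have "\<one> \<in> Tset" using Tset_all P by blast
  then obtain e where e: "e \<in> IP P" "\<one> \<ominus> e \<in> P" using P by (auto simp: Tset_def)
  have ec: "e \<in> carrier R" using e by (simp add: IP_def)
  have "e \<ominus> \<one> = \<ominus> (\<one> \<ominus> e)" using ec by algebra
  then have "e \<ominus> \<one> \<in> P" using e(2) ideal_neg[OF mp_ideal[OF P]] by simp
  then show ?thesis using e ec by (auto simp: IP_def)
qed

end


context thm10
begin

lemma quot_carrier_rep: "Y \<in> carrier (R Quot P) \<Longrightarrow> \<exists>r\<in>carrier R. Y = P +> r"
  unfolding FactRing_def A_RCOSETS_def RCOSETS_def a_r_coset_def by auto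

lemma alg1: "a \<in> carrier R \<Longrightarrow> b \<in> carrier R \<Longrightarrow> c \<in> carrier R \<Longrightarrow>
   a \<otimes> b \<oplus> c \<ominus> a = a \<otimes> (b \<ominus> \<one>) \<oplus> c"
  by algebra

lemma alg2: "x \<in> carrier R \<Longrightarrow> y \<in> carrier R \<Longrightarrow> x = (x \<ominus> y) \<oplus> y"
  by algebra

lemma CRT_sum:
  assumes Q: "Q \<in> min_primes R"
    and r: "\<And>P. P \<in> min_primes R \<Longrightarrow> r P \<in> carrier R"
    and e: "\<And>P. P \<in> min_primes R \<Longrightarrow> e P \<in> carrier R \<and> e P \<ominus> \<one> \<in> P \<and> (\<forall>Q\<in>min_primes R - {P}. e P \<in> Q)"
  shows "finsum R (\<lambda>P. r P \<otimes> e P) (min_primes R) \<ominus> r Q \<in> Q"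
proof -
  let ?g = "\<lambda>P. r P \<otimes> e P"
  have gc: "?g \<in> min_primes R \<rightarrow> carrier R" using r e by auto
  have fin: "finite (min_primes R - {Q})" using min_primes_finite by simp
  have eq: "min_primes R = insert Q (min_primes R - {Q})" using Q by blast
  have s: "finsum R ?g (min_primes R) = ?g Q \<oplus> finsum R ?g (min_primes R - {Q})"
    by (subst eq, rule finsum_insert) (use fin gc Q in auto)
  have rest: "finsum R ?g (min_primes R - {Q}) \<in> Q"
  proof (rule finsum_ideal[OF mp_ideal[OF Q] fin])
    fix P assume P: "P \<in> min_primes R - {Q}"
    then have "e P \<in> Q" using e Q by blast
    then show "r P \<otimes> e P \<in> Q" using ideal_lmult[OF mp_ideal[OF Q]] r P by blast
  qed
  have rc: "finsum R ?g (min_primes R - {Q}) \<in> carrier R" using gc by (auto intro: finsum_closed)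
  have rQ: "r Q \<in> carrier R" "e Q \<in> carrier R" using r e Q by auto
  have alg: "?g Q \<oplus> finsum R ?g (min_primes R - {Q}) \<ominus> r Q
      = r Q \<otimes> (e Q \<ominus> \<one>) \<oplus> finsum R ?g (min_primes R - {Q})"
    using alg1[OF rQ(1) rQ(2) rc] by simp
  have "r Q \<otimes> (e Q \<ominus> \<one>) \<in> Q" using e[OF Q] rQ ideal_lmult[OF mp_ideal[OF Q]] by blast
  then have "r Q \<otimes> (e Q \<ominus> \<one>) \<oplus> finsum R ?g (min_primes R - {Q}) \<in> Q"
    using rest ideal_add[OF mp_ideal[OF Q]] by blast
  then show ?thesis using s alg by simp
qed

lemma iso_main: "(\<lambda>r. \<lambda>P\<in>min_primes R. P +> r) \<in> ring_iso R (prod_quot R (min_primes R))"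
proof (rule ring_iso_memI)
  let ?h = "\<lambda>r. \<lambda>P\<in>min_primes R. P +> r"
  have hom: "\<And>P. P \<in> min_primes R \<Longrightarrow> (+>) P \<in> ring_hom R (R Quot P)"
    using ideal.rcos_ring_hom mp_ideal by blast
  show hc: "?h x \<in> carrier (prod_quot R (min_primes R))" if x: "x \<in> carrier R" for x
    unfolding prod_quot_def using ring_hom_closed[OF hom x] by auto
  show "?h (x \<otimes> y) = ?h x \<otimes>\<^bsub>prod_quot R (min_primes R)\<^esub> ?h y"
    if "x \<in> carrier R" "y \<in> carrier R" for x y
    unfolding prod_quot_def using ring_hom_mult[OF hom] that by (auto intro: restrict_ext)
  show "?h (x \<oplus> y) = ?h x \<oplus>\<^bsub>prod_quot R (min_primes R)\<^esub> ?h y"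
    if "x \<in> carrier R" "y \<in> carrier R" for x y
    unfolding prod_quot_def using ring_hom_add[OF hom] that by (auto intro: restrict_ext)
  show "?h \<one> = \<one>\<^bsub>prod_quot R (min_primes R)\<^esub>"
    unfolding prod_quot_def using ring_hom_one[OF hom] by (auto intro: restrict_ext)
  show "bij_betw ?h (carrier R) (carrier (prod_quot R (min_primes R)))"
    unfolding bij_betw_def
  proof
    show "inj_on ?h (carrier R)"
    proof (cases "\<one> = \<zero>")
      case True
      then have "carrier R = {\<zero>}" by (rule one_zeroD)
      then show ?thesis by simp
    next
      case False
      show ?thesis
      proof (rule inj_onI)
        fix x y assume x: "x \<in> carrier R" and y: "y \<in> carrier R" and e: "?h x = ?h y"
        have "x \<ominus> y \<in> \<Inter>(min_primes R)"
        proof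
          fix P assume P: "P \<in> min_primes R"
          have "P +> x = P +> y" using fun_cong[OF e, of P] P by simp
          then show "x \<ominus> y \<in> P" using coset_eq[OF mp_ideal[OF P] x y] by simp
        qed
        then have "x \<ominus> y = \<zero>" using Inter_min_zero[OF False] by blast
        moreover have "x = (x \<ominus> y) \<oplus> y" using alg2[OF x y] .
        ultimately show "x = y" using y by simp
      qed
    qed
    show "?h ` carrier R = carrier (prod_quot R (min_primes R))"
    proof
      show "?h ` carrier R \<subseteq> carrier (prod_quot R (min_primes R))" using hc by blast
      show "carrier (prod_quot R (min_primes R)) \<subseteq> ?h ` carrier R"
      proof
        fix f assume f: "f \<in> carrier (prod_quot R (min_primes R))"
        then have fP: "f \<in> (\<Pi>\<^sub>E P\<in>min_primes R. carrier (R Quot P))" unfolding prod_quot_def by simp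
        have "\<forall>P\<in>min_primes R. \<exists>r\<in>carrier R. f P = P +> r"
          using fP quot_carrier_rep by blast
        then obtain r where r: "\<And>P. P \<in> min_primes R \<Longrightarrow> r P \<in> carrier R \<and> f P = P +> r P"
          by metis
        have "\<forall>P\<in>min_primes R. \<exists>e\<in>carrier R. e \<ominus> \<one> \<in> P \<and> (\<forall>Q\<in>min_primes R - {P}. e \<in> Q)"
          using e_exists by blast
        then obtain e where e: "\<And>P. P \<in> min_primes R \<Longrightarrow> e P \<in> carrier R \<and> e P \<ominus> \<one> \<in> P \<and> (\<forall>Q\<in>min_primes R - {P}. e P \<in> Q)"
          by metis
        define s where "s = finsum R (\<lambda>P. r P \<otimes> e P) (min_primes R)"
        have sc: "s \<in> carrier R" unfolding s_def using r e by (auto intro: finsum_closed)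
        have "?h s = f"
        proof (rule ext)
          fix Q show "?h s Q = f Q"
          proof (cases "Q \<in> min_primes R")
            case True
            have "s \<ominus> r Q \<in> Q" unfolding s_def by (rule CRT_sum[OF True]) (use r e in auto)
            then have "Q +> s = Q +> r Q" using coset_eq[OF mp_ideal[OF True] sc] r True by blast
            then show ?thesis using True r by simp
          next
            case False
            then show ?thesis using fP by (simp add: PiE_def extensional_def)
          qed
        qed
        then show "f \<in> ?h ` carrier R" using sc by blast
      qed
    qed
  qed
qed

end


context thm10
begin

definition tau :: "'g \<Rightarrow> 'a set \<Rightarrow> 'a set" where
  "tau h = restrict (\<lambda>Q. gp h Q) (min_primes R)"

definition GP :: "'a set \<Rightarrow> 'g set" where
  "GP P = {h. gp h P = P}"

definition GO :: "'g set" where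
  "GO = {h. \<forall>Q\<in>min_primes R. gp h Q = Q}"

lemma GO_eq: "GO = stabilizer_all R act"
  by (simp add: GO_def stabilizer_all_def stabilizer_def)

lemma one_GO: "1 \<in> GO"
proof -
  have "\<forall>Q\<in>min_primes R. gp 1 Q = Q"
  proof
    fix Q assume "Q \<in> min_primes R"
    then have "Q \<subseteq> carrier R" using mp_ideal ideal_carr by blast
    then show "gp 1 Q = Q" using gpre_one by blast
  qed
  then show ?thesis by (simp add: GO_def)
qed

lemma GP_pow: "h \<in> GP P \<Longrightarrow> h ^ k \<in> GP P"
proof (induction k)
  case 0
  have "P = gp h P" using 0 by (simp add: GP_def)
  also have "\<dots> \<subseteq> carrier R" by (auto simp: gpre_def)
  finally have "P \<subseteq> carrier R" .
  then show ?case by (auto simp: GP_def gpre_one)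
next
  case (Suc k)
  then show ?case by (simp add: GP_def gpre_comp)
qed

lemma tau_closed: "tau h \<in> (\<Pi>\<^sub>E Q\<in>min_primes R. min_primes R)"
  using gpre_min by (auto simp: tau_def)

lemma gp_surj: "Q \<in> min_primes R \<Longrightarrow> \<exists>Q0\<in>min_primes R. gp h Q0 = Q"
  using gpre_cover by blast

lemma claimE:
  assumes h: "h \<in> GP P"
  shows "\<exists>h'\<in>GP P. \<forall>h2\<in>GP P. tau h2 = tau h \<longrightarrow> h2 * h' \<in> GO"
proof -
  let ?f = "\<lambda>k::nat. tau (h ^ k)"
  have fin: "finite (\<Pi>\<^sub>E Q\<in>min_primes R. min_primes R)"
    using min_primes_finite by (intro finite_PiE) auto
  have "range ?f \<subseteq> (\<Pi>\<^sub>E Q\<in>min_primes R. min_primes R)" using tau_closed by blast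
  then have "finite (range ?f)" using fin finite_subset by blast
  then have "\<not> inj ?f" using finite_imageD infinite_UNIV_nat by blast
  then obtain i j where ij: "i \<noteq> j" "?f i = ?f j" unfolding inj_def by blast
  obtain i0 d where id: "d > 0" "?f i0 = ?f (i0 + d)"
  proof (cases "i < j")
    case True
    then show ?thesis using that[of "j - i" i] ij by simp
  next
    case False
    then have "j < i" using ij by simp
    then show ?thesis using that[of "i - j" j] ij by simp
  qed
  have hd: "h ^ d \<in> GO" unfolding GO_def
  proof (intro CollectI ballI)
    fix Q assume Q: "Q \<in> min_primes R"
    obtain Q0 where Q0: "Q0 \<in> min_primes R" "gp (h ^ i0) Q0 = Q" using gp_surj[OF Q] by blast
    have "gp (h ^ (i0 + d)) Q0 = gp (h ^ i0) Q0"
      using fun_cong[OF id(2), of Q0] Q0 by (simp add: tau_def)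
    moreover have "h ^ (i0 + d) = h ^ i0 * h ^ d" by (simp add: power_add)
    ultimately have "gp (h ^ d) (gp (h ^ i0) Q0) = gp (h ^ i0) Q0" by (simp add: gpre_comp)
    then show "gp (h ^ d) Q = Q" using Q0 by simp
  qed
  define h' where "h' = h ^ (d - 1)"
  have hh': "h * h' = h ^ d" using id(1) unfolding h'_def
    by (metis Suc_diff_1 power_Suc)
  show ?thesis
  proof (rule bexI[of _ h'])
    show "h' \<in> GP P" unfolding h'_def by (rule GP_pow[OF h])
    show "\<forall>h2\<in>GP P. tau h2 = tau h \<longrightarrow> h2 * h' \<in> GO"
    proof (intro ballI impI)
      fix h2 assume "h2 \<in> GP P" and t: "tau h2 = tau h"
      show "h2 * h' \<in> GO" unfolding GO_def
      proof (intro CollectI ballI)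
        fix Q assume Q: "Q \<in> min_primes R"
        have "gp h2 Q = gp h Q" using fun_cong[OF t, of Q] Q by (simp add: tau_def)
        then have "gp (h2 * h') Q = gp (h * h') Q" by (simp add: gpre_comp)
        also have "\<dots> = Q" using hd Q hh' by (simp add: GO_def)
        finally show "gp (h2 * h') Q = Q" .
      qed
    qed
  qed
qed

lemma finite_reps:
  assumes P: "P \<in> min_primes R"
  shows "\<exists>H. finite H \<and> H \<subseteq> GP P \<and> (\<forall>h\<in>GP P. \<exists>h'\<in>H. h * h' \<in> GO)"
proof -
  define pick where "pick t = (SOME h'. h' \<in> GP P \<and> (\<forall>h2\<in>GP P. tau h2 = t \<longrightarrow> h2 * h' \<in> GO))" for t
  define H where "H = pick ` (tau ` GP P)"
  have fin: "finite (\<Pi>\<^sub>E Q\<in>min_primes R. min_primes R)"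
    using min_primes_finite by (intro finite_PiE) auto
  have "tau ` GP P \<subseteq> (\<Pi>\<^sub>E Q\<in>min_primes R. min_primes R)" using tau_closed by blast
  then have "finite (tau ` GP P)" using fin finite_subset by blast
  then have "finite H" by (simp add: H_def)
  moreover have pk: "pick (tau h) \<in> GP P \<and> (\<forall>h2\<in>GP P. tau h2 = tau h \<longrightarrow> h2 * pick (tau h) \<in> GO)"
    if "h \<in> GP P" for h
    unfolding pick_def by (rule someI_ex) (use claimE[OF that] in blast)
  moreover have "H \<subseteq> GP P" using pk by (auto simp: H_def)
  moreover have "\<forall>h\<in>GP P. \<exists>h'\<in>H. h * h' \<in> GO"
    using pk by (auto simp: H_def)
  ultimately show ?thesis by blast
qed

definition Mh :: "'a set \<Rightarrow> 'g \<Rightarrow> 'a set" where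
  "Mh J h = {a \<in> carrier R. \<forall>\<alpha>\<in>BW_basis I. act \<alpha> h a \<in> J}"

lemma Mh_ideal:
  assumes P: "ideal J R"
  shows "ideal (Mh J h) R"
proof (rule idealI)
  show "ring R" by (rule ring_axioms)
  show "subgroup (Mh J h) (add_monoid R)"
  proof (rule add.subgroupI)
    show "Mh J h \<subseteq> carrier R" by (auto simp: Mh_def)
    have "\<zero> \<in> Mh J h" using act_zero ideal_zero[OF P] by (simp add: Mh_def)
    then show "Mh J h \<noteq> {}" by blast
    fix a b assume a: "a \<in> Mh J h" and b: "b \<in> Mh J h"
    then have ac: "a \<in> carrier R" "b \<in> carrier R" by (auto simp: Mh_def)
    show "\<ominus> a \<in> Mh J h"
      using a ac act_neg ideal_neg[OF P] by (simp add: Mh_def)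
    show "a \<oplus> b \<in> Mh J h"
      using a b ac act_add ideal_add[OF P] by (simp add: Mh_def)
  qed
  fix a x assume a: "a \<in> Mh J h" and x: "x \<in> carrier R"
  have ac: "a \<in> carrier R" using a by (simp add: Mh_def)
  have "\<forall>\<alpha>\<in>BW_basis I. act \<alpha> h (x \<otimes> a) \<in> J"
  proof
    fix \<alpha> assume \<alpha>: "\<alpha> \<in> BW_basis I"
    show "act \<alpha> h (x \<otimes> a) \<in> J"
    proof (rule leib_ideal[OF P \<alpha> x ac])
      fix \<beta> \<gamma> assume bg: "(\<beta>, \<gamma>) \<in> splits \<alpha>"
      then have "\<beta> \<in> BW_basis I" "\<gamma> \<in> BW_basis I" using BW_splits[OF \<alpha>] by auto
      then show "act \<beta> h x \<otimes> act \<gamma> h a \<in> J"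
        using a x act_closed ideal_lmult[OF P] by (simp add: Mh_def)
    qed
  qed
  then show "x \<otimes> a \<in> Mh J h" using x ac by (simp add: Mh_def)
  then show "a \<otimes> x \<in> Mh J h" using x ac by (simp add: m_comm)
qed

end


context thm10
begin

lemma stabP:
  assumes P: "P \<in> min_primes R" and g: "g \<in> GP P" and \<alpha>: "\<alpha> \<in> BW_basis I" and a: "a \<in> P"
  shows "act \<alpha> g a \<in> P"
proof -
  have ac: "a \<in> carrier R" using ideal_carr[OF mp_ideal[OF P] a] .
  have "a \<in> gp g P" using g a by (simp add: GP_def)
  then have "act 0 g a \<in> P" by (simp add: gpre_def)
  then have "act \<alpha> 1 (act 0 g a) \<in> P" using minprime_stable[OF P \<alpha>] by blast
  then show ?thesis using act_split[OF \<alpha> ac] by simp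
qed

lemma GO_sub_GP: "P \<in> min_primes R \<Longrightarrow> GO \<subseteq> GP P"
  by (auto simp: GO_def GP_def)

lemma coset_zero: "ideal P R \<Longrightarrow> P +> \<zero> = P"
  using abelian_subgroup.a_rcos_const[OF abelian_subgroupI3[OF ideal.axioms(1) is_abelian_group]]
    ideal_zero by blast

lemma quot_simple_main:
  assumes P: "P \<in> min_primes R"
  shows "quot_simple I R act (stabilizer_all R act) P"
  unfolding quot_simple_def GO_eq[symmetric]
proof (intro allI impI)
  fix J assume hJ: "ideal J (R Quot P) \<and> (\<forall>\<alpha>\<in>BW_basis I. \<forall>g\<in>GO. \<forall>Y\<in>J. quot_act R P (act \<alpha> g) Y \<in> J)"
  have Ji: "ideal J (R Quot P)" using hJ by blast
  have Jst: "\<And>\<alpha> g Y. \<alpha> \<in> BW_basis I \<Longrightarrow> g \<in> GO \<Longrightarrow> Y \<in> J \<Longrightarrow> quot_act R P (act \<alpha> g) Y \<in> J"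
    using hJ by blast
  have Pi: "ideal P R" using mp_ideal[OF P] .
  have Pr: "primeideal P R" using min_primeD[OF P] .
  have sg: "abelian_subgroup P R" using abelian_subgroupI3[OF ideal.axioms(1)[OF Pi] is_abelian_group] .
  have Pc: "P \<subseteq> carrier R" using Pi ideal_carr by blast
  define J' where "J' = {a \<in> carrier R. P +> a \<in> J}"
  have J'i: "ideal J' R" unfolding J'_def
    using ring_hom_ring.ideal_vimage[OF ideal.rcos_ring_hom_ring[OF Pi] Ji] by simp
  have J'3: "act \<alpha> g a \<in> J'" if a: "a \<in> J'" and \<alpha>: "\<alpha> \<in> BW_basis I" and g: "g \<in> GO" for a \<alpha> g
  proof -
    have ac: "a \<in> carrier R" and Y: "P +> a \<in> J" using a by (auto simp: J'_def)
    have q: "quot_act R P (act \<alpha> g) (P +> a) \<in> J" using Jst[OF \<alpha> g Y] .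
    define y where "y = (SOME y. y \<in> P +> a)"
    have "a \<in> P +> a" using abelian_subgroup.a_rcos_self[OF sg ac] .
    then have yY: "y \<in> P +> a" unfolding y_def by (rule someI)
    have yc: "y \<in> carrier R" using yY a_r_coset_subset_G[OF Pc ac] by blast
    have "y \<ominus> a \<in> P" using abelian_subgroup.a_rcos_module_minus[OF sg ring_axioms ac yc] yY by simp
    then have "act \<alpha> g (y \<ominus> a) \<in> P" using stabP[OF P _ \<alpha>] GO_sub_GP[OF P] g by blast
    then have "act \<alpha> g y \<ominus> act \<alpha> g a \<in> P" using act_minus[OF \<alpha> yc ac] by simp
    then have "P +> act \<alpha> g y = P +> act \<alpha> g a"
      using coset_eq[OF Pi act_closed[OF \<alpha> yc] act_closed[OF \<alpha> ac]] by simp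
    moreover have "quot_act R P (act \<alpha> g) (P +> a) = P +> act \<alpha> g y"
      by (simp add: quot_act_def y_def)
    ultimately show ?thesis using q act_closed[OF \<alpha> ac] by (simp add: J'_def)
  qed
  show "J = {\<zero>\<^bsub>R Quot P\<^esub>} \<or> J = carrier (R Quot P)"
  proof (cases "J = {\<zero>\<^bsub>R Quot P\<^esub>}")
    case True then show ?thesis by blast
  next
    case False
    have z: "\<zero>\<^bsub>R Quot P\<^esub> = P" by (simp add: FactRing_def)
    have "\<zero>\<^bsub>R Quot P\<^esub> \<in> J" using Ji by (simp add: additive_subgroup.zero_closed ideal.axioms(1))
    then obtain Y where Y: "Y \<in> J" "Y \<noteq> P" using False z by blast
    have "Y \<in> carrier (R Quot P)" using Ji Y(1) by (meson ideal.Icarr)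
    then obtain j where jc: "j \<in> carrier R" and Yj: "Y = P +> j" using quot_carrier_rep by blast
    have jJ: "j \<in> J'" using Y Yj jc by (simp add: J'_def)
    have jP: "j \<notin> P"
    proof
      assume "j \<in> P"
      then have "j \<ominus> \<zero> \<in> P" using jc by (simp add: a_minus_def)
      then have "P +> j = P +> \<zero>" using coset_eq[OF Pi jc zero_closed] by simp
      then show False using Y Yj coset_zero[OF Pi] by simp
    qed
    define K where "K = \<Inter>(range (Mh J'))"
    have Ki: "ideal K R" unfolding K_def by (rule i_Intersect) (use Mh_ideal[OF J'i] in auto)
    have Kc: "K \<subseteq> carrier R" using Ki ideal_carr by blast
    have "stable_under I act UNIV K"
      unfolding stable_under_def
    proof (intro ballI)
      fix \<alpha> g a assume \<alpha>: "\<alpha> \<in> BW_basis I" and a: "a \<in> K"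
      have ac: "a \<in> carrier R" using a Kc by blast
      have "act \<alpha> g a \<in> Mh J' h" for h
        unfolding Mh_def
      proof (intro CollectI conjI ballI)
        show "act \<alpha> g a \<in> carrier R" using act_closed[OF \<alpha> ac] .
        fix \<beta> assume \<beta>: "\<beta> \<in> BW_basis I"
        show "act \<beta> h (act \<alpha> g a) \<in> J'"
        proof (rule comp_ideal[OF J'i \<beta> \<alpha> ac])
          fix \<gamma> assume "\<gamma> \<in> BW_basis I"
          moreover have "a \<in> Mh J' (h * g)" using a by (auto simp: K_def)
          ultimately show "act \<gamma> (h * g) a \<in> J'" by (simp add: Mh_def)
        qed
      qed
      then show "act \<alpha> g a \<in> K" by (auto simp: K_def)
    qed
    then have Kcases: "K = {\<zero>} \<or> K = carrier R" using simple_cases[OF Ki] by blast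
    show ?thesis
    proof (cases "K = carrier R")
      case True
      then have "\<one> \<in> Mh J' 1" by (auto simp: K_def)
      then have "act 0 1 \<one> \<in> J'" by (simp add: Mh_def)
      then have "\<one> \<in> J'" by (simp add: act01)
      then have "P +> \<one> \<in> J" by (simp add: J'_def)
      then have "\<one>\<^bsub>R Quot P\<^esub> \<in> J" by (simp add: FactRing_def)
      then have "J = carrier (R Quot P)" using Ji by (simp add: ideal.one_imp_carrier)
      then show ?thesis by blast
    next
      case False
      then have K0: "K = {\<zero>}" using Kcases by blast
      obtain H where H: "finite H" "H \<subseteq> GP P" "\<forall>h\<in>GP P. \<exists>h'\<in>H. h * h' \<in> GO"
        using finite_reps[OF P] by blast
      define y where "y = finprod R (\<lambda>h'. act 0 h' j) H"
      have fc: "(\<lambda>h'. act 0 h' j) \<in> H \<rightarrow> carrier R" using act_closed[OF BW0 jc] by blast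
      have yc: "y \<in> carrier R" unfolding y_def using fc by (rule finprod_closed)
      have yP: "y \<notin> P" unfolding y_def
      proof (rule prime_finprod_notin[OF Pr H(1)])
        fix h' assume h': "h' \<in> H"
        have "act 0 h' j \<notin> P"
        proof
          assume "act 0 h' j \<in> P"
          then have "j \<in> gp h' P" using jc by (simp add: gpre_def)
          then show False using h' H(2) jP by (auto simp: GP_def)
        qed
        then show "act 0 h' j \<in> carrier R - P" using act_closed[OF BW0 jc] by blast
      qed
      have yM: "y \<in> Mh J' h" if h: "h \<in> GP P" for h
      proof -
        obtain h' where h': "h' \<in> H" "h * h' \<in> GO" using H(3) h by blast
        have "act 0 h' j \<in> Mh J' h" unfolding Mh_def
        proof (intro CollectI conjI ballI)
          show "act 0 h' j \<in> carrier R" using act_closed[OF BW0 jc] .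
          fix \<beta> assume \<beta>: "\<beta> \<in> BW_basis I"
          show "act \<beta> h (act 0 h' j) \<in> J'"
          proof (rule comp_ideal[OF J'i \<beta> BW0 jc])
            fix \<gamma> assume \<gamma>: "\<gamma> \<in> BW_basis I"
            have "act 0 (h * h') j \<in> J'" using J'3[OF jJ BW0 h'(2)] .
            then have "act \<gamma> 1 (act 0 (h * h') j) \<in> J'" using J'3[OF _ \<gamma> one_GO] by blast
            then show "act \<gamma> (h * h') j \<in> J'" using act_split[OF \<gamma> jc] by simp
          qed
        qed
        then show ?thesis unfolding y_def
          by (rule finprod_in_ideal[OF Mh_ideal[OF J'i] H(1) fc h'(1)])
      qed
      obtain e where e: "e \<in> carrier R" "e \<ominus> \<one> \<in> P" "\<forall>Q\<in>min_primes R - {P}. e \<in> Q"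
        using e_exists[OF P] by blast
      have eP: "e \<notin> P"
      proof
        assume "e \<in> P"
        then have "e \<ominus> (e \<ominus> \<one>) \<in> P" using e(2) ideal_minus[OF Pi] by blast
        moreover have "e \<ominus> (e \<ominus> \<one>) = \<one>" using e(1) by algebra
        ultimately have "\<one> \<in> P" by simp
        then have "P = carrier R" using Pi by (simp add: ideal.one_imp_carrier)
        then show False using primeideal.I_notcarr[OF Pr] by simp
      qed
      define a where "a = e \<otimes> y"
      have ac: "a \<in> carrier R" using e(1) yc by (simp add: a_def)
      have aP: "a \<notin> P" using primeideal.I_prime[OF Pr e(1) yc] eP yP by (auto simp: a_def)
      have "a \<in> Mh J' h" for h
        unfolding Mh_def
      proof (intro CollectI conjI ballI)
        show "a \<in> carrier R" by (rule ac)
        fix \<beta> assume \<beta>: "\<beta> \<in> BW_basis I"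
        show "act \<beta> h a \<in> J'" unfolding a_def
        proof (rule leib_ideal[OF J'i \<beta> e(1) yc])
          fix \<beta>1 \<beta>2 assume s: "(\<beta>1, \<beta>2) \<in> splits \<beta>"
          have b12: "\<beta>1 \<in> BW_basis I" "\<beta>2 \<in> BW_basis I" using BW_splits[OF \<beta> s] by auto
          show "act \<beta>1 h e \<otimes> act \<beta>2 h y \<in> J'"
          proof (cases "h \<in> GP P")
            case True
            then have "act \<beta>2 h y \<in> J'" using yM b12 by (simp add: Mh_def)
            then show ?thesis using ideal_lmult[OF J'i act_closed[OF b12(1) e(1)]] by blast
          next
            case False
            then have "gp h P \<noteq> P" by (simp add: GP_def)
            moreover have "gp h P \<in> min_primes R" using gpre_min[OF P] .
            ultimately have "e \<in> gp h P" using e(3) by blast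
            then have "act 0 h e \<in> P" by (simp add: gpre_def)
            then have "act \<beta>1 1 (act 0 h e) \<in> P" using minprime_stable[OF P b12(1)] by blast
            then have "act \<beta>1 h e \<in> P" using act_split[OF b12(1) e(1)] by simp
            moreover have "P \<subseteq> J'"
            proof
              fix x assume x: "x \<in> P"
              then have xc: "x \<in> carrier R" using Pc by blast
              have "x \<ominus> \<zero> \<in> P" using x xc by (simp add: a_minus_def)
              then have "P +> x = P +> \<zero>" using coset_eq[OF Pi xc zero_closed] by simp
              then have "P +> x = \<zero>\<^bsub>R Quot P\<^esub>" using coset_zero[OF Pi] z by simp
              then show "x \<in> J'" using \<open>\<zero>\<^bsub>R Quot P\<^esub> \<in> J\<close> xc by (simp add: J'_def)
            qed
            ultimately have "act \<beta>1 h e \<in> J'" by blast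
            then show ?thesis using ideal_rmult[OF J'i _ act_closed[OF b12(2) yc]] by blast
          qed
        qed
      qed
      then have "a \<in> K" by (auto simp: K_def)
      moreover have "a \<noteq> \<zero>" using aP ideal_zero[OF Pi] by blast
      ultimately show ?thesis using K0 by blast
    qed
  qed
qed

end


context thm10
begin

lemma main_conj:
  "(\<forall>P\<in>min_primes R.
            stable_under I act {1} P \<and>
            stable_under I act (stabilizer R act P) P \<and> domain (R Quot P) \<and>
            quot_simple I R act (stabilizer_all R act) P)
       \<and> (\<forall>P\<in>min_primes R. \<forall>g. gpre R act g P \<in> min_primes R)
       \<and> (\<forall>P\<in>min_primes R. \<forall>Q\<in>min_primes R. \<exists>g. gpre R act g P = Q)
       \<and> (\<lambda>r. \<lambda>P\<in>min_primes R. a_r_coset R P r) \<in> ring_iso R (prod_quot R (min_primes R))"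
proof (intro conjI ballI allI)
  fix P assume P: "P \<in> min_primes R"
  show "stable_under I act {1} P"
    unfolding stable_under_def using minprime_stable[OF P] by blast
  show "stable_under I act (stabilizer R act P) P"
    unfolding stable_under_def
  proof (intro ballI)
    fix \<alpha> g a assume "\<alpha> \<in> BW_basis I" "g \<in> stabilizer R act P" "a \<in> P"
    then show "act \<alpha> g a \<in> P" using stabP[OF P] by (simp add: stabilizer_def GP_def)
  qed
  show "domain (R Quot P)" using primeideal.quotient_is_domain[OF min_primeD[OF P]] .
  show "quot_simple I R act (stabilizer_all R act) P" by (rule quot_simple_main[OF P])
next
  fix P g assume P: "P \<in> min_primes R"
  show "gpre R act g P \<in> min_primes R" using gpre_min[OF P] .
next
  fix P Q assume "P \<in> min_primes R" "Q \<in> min_primes R"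
  then show "\<exists>g. gpre R act g P = Q" using transitive by blast
next
  show "(\<lambda>r. \<lambda>P\<in>min_primes R. a_r_coset R P r) \<in> ring_iso R (prod_quot R (min_primes R))"
    using iso_main .
qed

end

theorem mainTheorem10:
  fixes I :: "'i set"
    and m :: "'i mon \<Rightarrow> 'i mon \<Rightarrow> ('i, 'c::field) vec"
    and gact :: "'g::monoid_mult \<Rightarrow> 'i mon \<Rightarrow> ('i, 'c) vec"
    and R :: "('a, 'b) ring_scheme"
    and smul :: "'c \<Rightarrow> 'a \<Rightarrow> 'a"
    and act :: "'i mon \<Rightarrow> 'g \<Rightarrow> 'a \<Rightarrow> 'a"
  assumes hopf: "BW_hopf I m"
    and CG: "CG_module_algebra I m gact"
    and modalg: "D_module_algebra I m gact R smul act"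
    and comm: "cring R"
    and noeth: "noetherian_ring R"
    and simple: "D_simple I R act"
    and inj: "\<And>g. inj_on (gmap act g) (carrier R)"
  shows "(\<forall>P\<in>min_primes R.
            stable_under I act {1} P \<and>
            stable_under I act (stabilizer R act P) P \<and> domain (R Quot P) \<and>
            quot_simple I R act (stabilizer_all R act) P)
       \<and> (\<forall>P\<in>min_primes R. \<forall>g. gpre R act g P \<in> min_primes R)
       \<and> (\<forall>P\<in>min_primes R. \<forall>Q\<in>min_primes R. \<exists>g. gpre R act g P = Q)
       \<and> (\<lambda>r. \<lambda>P\<in>min_primes R. a_r_coset R P r) \<in> ring_iso R (prod_quot R (min_primes R))"
proof -
  have L: "thm10 R I m gact smul act"
    unfolding thm10_def thm10_axioms_def using comm hopf CG modalg noeth simple inj by blast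
  show ?thesis by (rule thm10.main_conj[OF L])
qed



end
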